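(* Suppose $J$ satisfies (J) and $J(r)=0$ for all $r\ge K_*$, for some $K_*>0$. Then there exist constants $L_0>0$ and $C>0$ such that for all $r\ge L_0$: $|\tilde J(r,\rho)-J_*(r-\rho)|\le C r^{-1}$ when $\rho\in[r-K_*,r+K_*]$, and $\tilde J(r,\rho)=J_*(r-\rho)=0$ when $\rho>0$, $\rho\notin[r-K_*,r+K_*]$.
   Context: $N\ge2$, $B_\rho=\{|x|<\rho\}\subset\mathbb R^N$. (J): $J\in C(\mathbb R_+)\cap L^\infty(\mathbb R_+)$, $J\ge0$, $J(0)>0$, $\int_{\mathbb R^N}J(|x|)dx=1$. $\tilde J(r,\rho)=\int_{\partial B_\rho}J(|x-y|)dS_y$ for $|x|=r$. $J_*(l)=\int_{\mathbb R^{N-1}}J(|(l,x')|)dx'$, $l\in\mathbb R$, $x'\in\mathbb R^{N-1}$. *)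

theory Defs
  imports "HOL-Analysis.Analysis"
begin

text \<open>We model R^N as the product type real \<times> 'a, where 'a is a Euclidean space of
dimension N-1 (so N = DIM(real \<times> 'a) \<ge> 2 automatically). The first coordinate plays the
role of l in J_*(l).\<close>

definition kernel_J :: "('a::euclidean_space) itself \<Rightarrow> (real \<Rightarrow> real) \<Rightarrow> bool" where
  "kernel_J _ J \<longleftrightarrow>
     continuous_on {0..} J \<and> bounded (J ` {0..}) \<and> (\<forall>r\<ge>0. J r \<ge> 0) \<and> J 0 > 0 \<and>
     integrable lborel (\<lambda>x::real \<times> 'a. J (norm x)) \<and>
     (\<integral>x. J (norm (x::real \<times> 'a)) \<partial>lborel) = 1"

text \<open>Surface integral over the sphere of radius rho centred at 0, with respect to the
(N-1)-dimensional surface measure, expressed through the cone-measure construction: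
sigma_rho(A) = (N/rho) * Lebesgue measure of {t y. y \<in> A, 0 \<le> t \<le> 1}, i.e. sigma_rho is
(N/rho) times the push-forward of Lebesgue measure on the ball B_rho under y \<mapsto> rho y/|y|.\<close>
definition sphere_integral :: "real \<Rightarrow> ('b::euclidean_space \<Rightarrow> real) \<Rightarrow> real" where
  "sphere_integral \<rho> f =
     (real DIM('b) / \<rho>) * (LINT y : ball 0 \<rho> | lborel. f ((\<rho> / norm y) *\<^sub>R y))"

definition Jtilde :: "(real \<Rightarrow> real) \<Rightarrow> (real \<times> 'a::euclidean_space) \<Rightarrow> real \<Rightarrow> real" where
  "Jtilde J x \<rho> = sphere_integral \<rho> (\<lambda>y::real \<times> 'a. J (norm (x - y)))"

definition Jstar :: "('a::euclidean_space) itself \<Rightarrow> (real \<Rightarrow> real) \<Rightarrow> real \<Rightarrow> real" where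
  "Jstar _ J l = (\<integral>x'. J (norm (l, x'::'a)) \<partial>lborel)"

end

theory Submission
  imports Defs
begin

lemma distr_norm_lborel:
  defines "m \<equiv> DIM('a::euclidean_space)"
  shows "distr (lborel::'a measure) borel norm =
    density lborel (\<lambda>u. ennreal (real m * unit_ball_vol (real m) * u ^ (m - 1)) * indicator {0..} u)"
    (is "?L = ?R")
proof (rule measure_eqI_generator_eq[where E="range atMost" and \<Omega>=UNIV and A="\<lambda>i. {..real i}"])
  show "Int_stable (range atMost :: real set set)"
    by (auto simp: Int_stable_def)
  show "range atMost \<subseteq> Pow (UNIV::real set)" by auto
  have sb: "sets (borel::real measure) = sigma_sets UNIV (range atMost)"
    by (subst borel_eq_atMost) (simp add: sets_measure_of)
  show "sets ?L = sigma_sets UNIV (range atMost)" using sb by simp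
  show "sets ?R = sigma_sets UNIV (range atMost)" using sb by simp
  show "range (\<lambda>i::nat. {..real i}) \<subseteq> range atMost" by auto
  show "(\<Union>i::nat. {..real i}) = UNIV"
    by (auto intro: real_arch_simple)
  have m1: "m \<ge> 1" unfolding m_def using DIM_positive by (simp add: Suc_le_eq)
  have key: "emeasure ?L {..a} = emeasure ?R {..a} \<and> emeasure ?L {..a} \<noteq> \<infinity>" for a :: real
  proof (cases "a < 0")
    case True
    have "emeasure ?L {..a} = emeasure lborel (norm -` {..a} :: 'a set)"
      by (simp add: emeasure_distr)
    also have "(norm -` {..a} :: 'a set) = {}" using True by (auto, smt (verit) norm_ge_zero)
    finally have L: "emeasure ?L {..a} = 0" by simp
    have "emeasure ?R {..a} = (\<integral>\<^sup>+u. ennreal (real m * unit_ball_vol (real m) * u ^ (m - 1)) * indicator {0..} u * indicator {..a} u \<partial>lborel)"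
      by (simp add: emeasure_density mult.assoc)
    also have "\<dots> = 0" using True
      by (subst nn_integral_0_iff_AE) (auto simp: indicator_def)
    finally show ?thesis using L by simp
  next
    case False
    have "emeasure ?L {..a} = emeasure lborel (norm -` {..a} :: 'a set)"
      by (simp add: emeasure_distr)
    also have "(norm -` {..a} :: 'a set) = cball 0 a" by (auto simp: dist_norm)
    also have "emeasure lborel (cball (0::'a) a) = ennreal (unit_ball_vol (real m) * a ^ m)"
      using False unfolding m_def by (intro emeasure_cball) simp
    finally have L: "emeasure ?L {..a} = ennreal (unit_ball_vol (real m) * a ^ m)" .
    have "emeasure ?R {..a} = (\<integral>\<^sup>+u. ennreal (real m * unit_ball_vol (real m) * u ^ (m - 1)) * indicator {0..a} u \<partial>lborel)"
      by (simp add: emeasure_density mult.assoc) (intro nn_integral_cong, auto simp: indicator_def)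
    also have "\<dots> = ennreal (unit_ball_vol (real m) * a ^ m - unit_ball_vol (real m) * 0 ^ m)"
    proof (rule nn_integral_FTC_Icc)
      fix x assume "x \<in> {0..a}"
      show "((\<lambda>u. unit_ball_vol (real m) * u ^ m) has_real_derivative real m * unit_ball_vol (real m) * x ^ (m - 1)) (at x)"
        by (auto intro!: derivative_eq_intros)
      show "0 \<le> real m * unit_ball_vol (real m) * x ^ (m - 1)"
        using \<open>x \<in> {0..a}\<close> by (auto intro!: mult_nonneg_nonneg)
    qed (use False in auto)
    also have "\<dots> = ennreal (unit_ball_vol (real m) * a ^ m)" using m1 by (simp add: power_0_left)
    finally show ?thesis using L by simp
  qed
  show "emeasure ?L X = emeasure ?R X" if "X \<in> range atMost" for X
    using that key by auto
  show "emeasure ?L {..real i} \<noteq> \<infinity>" for i :: nat using key by blast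
qed

lemma nn_integral_radial:
  fixes g :: "real \<Rightarrow> ennreal"
  assumes [measurable]: "g \<in> borel_measurable borel"
  defines "m \<equiv> DIM('a::euclidean_space)"
  shows "(\<integral>\<^sup>+z. g (norm (z::'a)) \<partial>lborel) =
    (\<integral>\<^sup>+u. g u * ennreal (real m * unit_ball_vol (real m) * u ^ (m - 1)) * indicator {0..} u \<partial>lborel)"
proof -
  have "(\<integral>\<^sup>+z. g (norm (z::'a)) \<partial>lborel) = (\<integral>\<^sup>+u. g u \<partial>distr (lborel::'a measure) borel norm)"
    by (simp add: nn_integral_distr)
  also have "\<dots> = (\<integral>\<^sup>+u. ennreal (real m * unit_ball_vol (real m) * u ^ (m - 1)) * indicator {0..} u * g u \<partial>lborel)"
    unfolding distr_norm_lborel m_def by (subst nn_integral_density) auto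
  finally show ?thesis by (simp add: mult_ac)
qed

lemma emeasure_orth_image_open:
  fixes G :: "'b::euclidean_space \<Rightarrow> 'b"
  assumes G: "orthogonal_transformation G" and S: "open S"
  shows "emeasure lborel (G ` S) = emeasure lborel S"
proof -
  define K where "K = {i::'b \<times> real. 0 < snd i \<and> ball (fst i) (snd i) \<subseteq> S}"
  have cov: "\<exists>i. i \<in> K \<and> x \<in> ball (fst i) (snd i) \<and> snd i < d" if "x \<in> S" "0 < d" for x d
  proof -
    obtain e where e: "e > 0" "ball x e \<subseteq> S" using S \<open>x \<in> S\<close> open_contains_ball by blast
    show ?thesis
      by (rule exI[of _ "(x, min e (d/2))"]) (use e \<open>0 < d\<close> in \<open>auto simp: K_def\<close>)
  qed
  obtain C where C: "countable C" "C \<subseteq> K"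
     "pairwise (\<lambda>i j. disjnt (ball (fst i) (snd i)) (ball (fst j) (snd j))) C"
     "negligible(S - (\<Union>i \<in> C. ball (fst i) (snd i)))"
    by (rule Vitali_covering_theorem_balls[of S K fst snd, OF cov])
  define B where "B i = ball (fst i) (snd i)" for i :: "'b \<times> real"
  define N where "N = S - (\<Union>i \<in> C. B i)"
  have SU: "S = (\<Union>i \<in> C. B i) \<union> N" using C(2) by (auto simp: N_def B_def K_def)
  have Nb: "N \<in> sets lborel" unfolding N_def B_def using S
    by (simp del: UN_simps) (intro sets.Diff borel_open open_UN ballI open_ball, auto)
  have Nn: "N \<in> null_sets lborel"
  proof -
    have "N \<in> null_sets lebesgue" using C(4) by (simp add: negligible_iff_null_sets N_def B_def)
    then show ?thesis using null_sets_completion_iff[OF Nb] by simp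
  qed
  have disj: "disjoint_family_on B C" using C(3)
    by (auto simp: disjoint_family_on_def pairwise_def disjnt_def B_def)
  have linG: "linear G" using G by (simp add: orthogonal_transformation_linear)
  have contG: "continuous_on UNIV G" using linG by (simp add: linear_continuous_on linear_linear)
  have GB: "G ` B i = ball (G (fst i)) (snd i)" for i
    unfolding B_def by (rule image_orthogonal_transformation_ball[OF G])
  have GSU: "G ` S = (\<Union>i \<in> C. G ` B i) \<union> G ` N" by (subst SU) auto
  have GNb: "G ` N \<in> sets lborel"
  proof -
    have "G ` N = inv G -` N"
      using bij_vimage_eq_inv_image[OF bij_imp_bij_inv[OF orthogonal_transformation_bij[OF G]], of N]
        inv_inv_eq[OF orthogonal_transformation_bij[OF G]] by simp
    moreover have "inv G \<in> borel_measurable borel"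
      using orthogonal_transformation_inv[OF G]
      by (intro borel_measurable_continuous_onI) (simp add: linear_continuous_on linear_linear orthogonal_transformation_linear)
    ultimately show ?thesis using Nb by (simp add: measurable_sets_borel)
  qed
  have GNn: "G ` N \<in> null_sets lborel"
  proof -
    have "negligible (G ` N)"
      by (rule negligible_differentiable_image_negligible)
         (use C(4) linG in \<open>auto simp: N_def B_def linear_imp_differentiable differentiable_on_def\<close>)
    then have "G ` N \<in> null_sets lebesgue" by (simp add: negligible_iff_null_sets)
    then show ?thesis using null_sets_completion_iff[OF GNb] by simp
  qed
  have disjG: "disjoint_family_on (\<lambda>i. G ` B i) C"
    using disj unfolding disjoint_family_on_def
    by (simp add: image_Int[OF orthogonal_transformation_inj[OF G], symmetric])
  have "emeasure lborel (G ` S) = emeasure lborel (\<Union>i \<in> C. G ` B i)"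
    unfolding GSU by (rule emeasure_Un_null_set) (use GNn in \<open>auto simp: GB intro!: borel_open open_UN\<close>)
  also have "\<dots> = (\<integral>\<^sup>+i. emeasure lborel (G ` B i) \<partial>count_space C)"
    by (rule emeasure_UN_countable) (use GB C(1) disjG in auto)
  also have "\<dots> = (\<integral>\<^sup>+i. emeasure lborel (B i) \<partial>count_space C)"
  proof (intro nn_integral_cong)
    fix i assume "i \<in> space (count_space C)"
    then have "snd i \<ge> 0" using C(2) by (auto simp: K_def)
    then show "emeasure lborel (G ` B i) = emeasure lborel (B i)"
      unfolding GB by (simp add: B_def emeasure_ball)
  qed
  also have "\<dots> = emeasure lborel (\<Union>i \<in> C. B i)"
    by (rule emeasure_UN_countable[symmetric]) (use C(1) disj in \<open>auto simp: B_def[abs_def]\<close>)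
  also have "\<dots> = emeasure lborel S"
  proof -
    have "emeasure lborel ((\<Union>i\<in>C. B i) \<union> N) = emeasure lborel (\<Union>i\<in>C. B i)"
      by (rule emeasure_Un_null_set) (use Nn in \<open>auto simp: B_def intro!: borel_open open_UN\<close>)
    then show ?thesis using SU by simp
  qed
  finally show ?thesis .
qed

lemma distr_lborel_orth:
  fixes H :: "'b::euclidean_space \<Rightarrow> 'b"
  assumes H: "orthogonal_transformation H"
  shows "distr lborel borel H = lborel"
proof (rule lborel_eqI[symmetric])
  have Hm: "H \<in> borel_measurable borel"
    using H by (intro borel_measurable_continuous_onI) (simp add: linear_continuous_on linear_linear orthogonal_transformation_linear)
  fix l u :: 'b assume lu: "\<And>b. b \<in> Basis \<Longrightarrow> l \<bullet> b \<le> u \<bullet> b"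
  have "emeasure (distr lborel borel H) (box l u) = emeasure lborel (H -` box l u)"
    using Hm by (simp add: emeasure_distr)
  also have "H -` box l u = inv H ` box l u"
    using orthogonal_transformation_bij[OF H] by (simp add: bij_vimage_eq_inv_image)
  also have "emeasure lborel (inv H ` box l u) = emeasure lborel (box l u)"
    by (rule emeasure_orth_image_open) (use orthogonal_transformation_inv[OF H] in auto)
  also have "\<dots> = (\<Prod>b\<in>Basis. (u - l) \<bullet> b)" using lu by simp
  finally show "emeasure (distr lborel borel H) (box l u) = (\<Prod>b\<in>Basis. (u - l) \<bullet> b)" .
qed simp

lemma householder_exists:
  fixes a b :: "'b::euclidean_space" assumes ab: "norm a = norm b"
  obtains H where "orthogonal_transformation H" "H a = b"
proof (cases "a = b")
  case True then show ?thesis using that[of "\<lambda>x. x"] by simp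
next
  case False
  define v where "v = a - b"
  have vv: "v \<bullet> v > 0" using False by (simp add: v_def)
  define H where "H y = y - (2 * (y \<bullet> v) / (v \<bullet> v)) *\<^sub>R v" for y
  have lin: "linear H"
    by (rule linearI) (simp_all add: H_def inner_add_left algebra_simps add_divide_distrib scaleR_add_left)
  have nrm: "norm (H y) = norm y" for y
  proof -
    have "(norm (H y))\<^sup>2 = (norm y)\<^sup>2"
      using vv unfolding power2_norm_eq_inner H_def
      by (simp add: inner_diff_left inner_diff_right algebra_simps power2_eq_square) (simp add: field_simps inner_commute)
    then show ?thesis by (simp add: power2_eq_iff_nonneg)
  qed
  have "H a = b"
  proof -
    have aa: "a \<bullet> a = b \<bullet> b" using ab by (simp add: norm_eq_sqrt_inner)
    have "2 * (a \<bullet> v) = v \<bullet> v" unfolding v_def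
      using aa by (simp add: inner_diff_left inner_diff_right inner_commute)
    then show ?thesis using vv by (simp add: H_def v_def)
  qed
  then show ?thesis using that[of H] lin nrm by (simp add: orthogonal_transformation)
qed


definition J0 :: "(real \<Rightarrow> real) \<Rightarrow> real \<Rightarrow> real" where "J0 J t = J (max 0 t)"

lemma J0_meas[measurable]:
  assumes "continuous_on {0..} J"
  shows "J0 J \<in> borel_measurable borel"
proof -
  have "continuous_on UNIV (J0 J)" unfolding J0_def
    by (rule continuous_on_compose2[OF assms]) (auto intro!: continuous_intros)
  then show ?thesis by (rule borel_measurable_continuous_onI)
qed

lemma J0_eq: "t \<ge> 0 \<Longrightarrow> J0 J t = J t" by (simp add: J0_def)

lemma Jball_meas:
  assumes cJ: "continuous_on {0..} J"
  shows "(\<lambda>y. indicator (ball 0 \<rho>) y * J0 J (norm (c - (\<rho> / norm y) *\<^sub>R y))) \<in> borel_measurable (borel :: ('b::euclidean_space) measure)"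
proof -
  have m1: "(\<lambda>y::'b. norm (c - (\<rho> / norm y) *\<^sub>R y)) \<in> borel_measurable borel" by measurable
  show ?thesis
    by (intro borel_measurable_times borel_measurable_indicator measurable_compose[OF m1 J0_meas[OF cJ]]) auto
qed

lemma Jtilde_nn:
  fixes x :: "real \<times> 'a::euclidean_space"
  assumes cJ: "continuous_on {0..} J" and nn: "\<forall>r\<ge>0. J r \<ge> 0" and nx: "norm x = r"
  shows "Jtilde J x \<rho> = real DIM(real \<times> 'a) / \<rho> *
    enn2real (\<integral>\<^sup>+y. ennreal (indicator (ball 0 \<rho>) y * J0 J (norm ((r, 0::'a) - (\<rho> / norm y) *\<^sub>R y))) \<partial>lborel)"
proof -
  have r0: "r \<ge> 0" using nx by auto
  obtain H where H: "orthogonal_transformation H" "H (r, 0::'a) = x"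
    using householder_exists[of "(r, 0::'a)" x] nx r0 by auto
  have Hm: "H \<in> borel_measurable borel"
    using H by (intro borel_measurable_continuous_onI) (simp add: linear_continuous_on linear_linear orthogonal_transformation_linear)
  note [measurable] = J0_meas[OF cJ]
  define g where "g y = indicator (ball 0 \<rho>) y * J0 J (norm (x - (\<rho> / norm y) *\<^sub>R y))" for y :: "real \<times> 'a"
  have gm[measurable]: "g \<in> borel_measurable borel" unfolding g_def by (rule Jball_meas[OF cJ])
  have "Jtilde J x \<rho> = real DIM(real \<times> 'a) / \<rho> * integral\<^sup>L lborel g"
    unfolding Jtilde_def sphere_integral_def set_lebesgue_integral_def g_def
    by (simp add: J0_eq)
  also have "integral\<^sup>L lborel g = integral\<^sup>L (distr lborel borel H) g"
    by (simp add: distr_lborel_orth[OF H(1)])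
  also have "\<dots> = integral\<^sup>L lborel (\<lambda>y. g (H y))"
    by (rule integral_distr) (use Hm in auto)
  also have "(\<lambda>y. g (H y)) = (\<lambda>y. indicator (ball 0 \<rho>) y * J0 J (norm ((r, 0::'a) - (\<rho> / norm y) *\<^sub>R y)))"
  proof
    fix y
    have nH: "norm (H y) = norm y" using H(1) by (simp add: orthogonal_transformation_norm)
    have "x - (\<rho> / norm y) *\<^sub>R H y = H ((r, 0::'a) - (\<rho> / norm y) *\<^sub>R y)"
      using H orthogonal_transformation_linear[OF H(1)] by (simp add: linear_diff linear_cmul)
    then show "g (H y) = indicator (ball 0 \<rho>) y * J0 J (norm ((r, 0::'a) - (\<rho> / norm y) *\<^sub>R y))"
      unfolding g_def using nH by (simp add: indicator_def orthogonal_transformation_norm[OF H(1)])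
  qed
  also have "integral\<^sup>L lborel \<dots> = enn2real (\<integral>\<^sup>+y. ennreal (indicator (ball 0 \<rho>) y * J0 J (norm ((r, 0::'a) - (\<rho> / norm y) *\<^sub>R y))) \<partial>lborel)"
    by (rule integral_eq_nn_integral) (simp add: Jball_meas[OF cJ], simp add: J0_def nn indicator_def)
  finally show ?thesis .
qed

lemma nn_integral_scale:
  fixes h :: "'b::euclidean_space \<Rightarrow> ennreal"
  assumes c: "c \<noteq> 0" and [measurable]: "h \<in> borel_measurable borel"
  shows "(\<integral>\<^sup>+z. h z \<partial>lborel) = ennreal (\<bar>c\<bar> ^ DIM('b)) * (\<integral>\<^sup>+w. h (c *\<^sub>R w) \<partial>lborel)"
  by (subst lborel_affine[OF c, of 0]) (simp add: nn_integral_density nn_integral_distr nn_integral_cmult)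

lemma fst_borel_meas: "fst \<in> borel_measurable (borel :: ('b::euclidean_space \<times> 'c::euclidean_space) measure)"
  by (rule borel_measurable_continuous_onI) (rule continuous_on_fst[OF continuous_on_id])

lemma snd_borel_meas: "snd \<in> borel_measurable (borel :: ('b::euclidean_space \<times> 'c::euclidean_space) measure)"
  by (rule borel_measurable_continuous_onI) (rule continuous_on_snd[OF continuous_on_id])

lemma ball_cone_integral:
  fixes \<phi> :: "real \<Rightarrow> real"
  assumes \<rho>: "\<rho> > 0" and [measurable]: "\<phi> \<in> borel_measurable borel"
    and nn: "\<And>c. \<phi> c \<ge> 0" and neg: "\<And>c. c \<le> 0 \<Longrightarrow> \<phi> c = 0"
  defines "m \<equiv> DIM('a::euclidean_space)"
  shows "(\<integral>\<^sup>+y. ennreal (indicator (ball 0 \<rho>) y * \<phi> (fst y / norm y)) \<partial>(lborel::(real\<times>'a) measure)) =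
    (\<integral>\<^sup>+w. ennreal (\<phi> (1 / sqrt (1 + (norm (w::'a))\<^sup>2)) * \<rho> ^ (m + 1) / (real (m + 1) * sqrt (1 + (norm w)\<^sup>2) ^ (m + 1))) \<partial>lborel)"
proof -
  define s where "s w = sqrt (1 + (norm w)\<^sup>2)" for w :: 'a
  have s1: "s w \<ge> 1" for w unfolding s_def by simp
  define F where "F y = ennreal (indicator (ball 0 \<rho>) y * \<phi> (fst y / norm y))" for y :: "real \<times> 'a"
  have m1: "(\<lambda>y::real\<times>'a. fst y / norm y) \<in> borel_measurable borel"
    by (intro borel_measurable_divide fst_borel_meas borel_measurable_norm)
  have Fm[measurable]: "F \<in> borel_measurable borel" unfolding F_def
    by (intro measurable_compose[OF _ measurable_ennreal] borel_measurable_times borel_measurable_indicator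
      measurable_compose[OF m1 assms(2)]) auto
  define G where "G = (\<lambda>(t, w). ennreal (t ^ m * \<phi> (1 / s w) * (if 0 < t \<and> t < \<rho> / s w then 1 else 0)))"
  have Gm[measurable]: "G \<in> borel_measurable (lborel \<Otimes>\<^sub>M lborel)" unfolding G_def s_def by measurable
  have "(\<integral>\<^sup>+y. F y \<partial>(lborel::(real\<times>'a) measure)) = (\<integral>\<^sup>+y. F y \<partial>(lborel \<Otimes>\<^sub>M lborel))"
    by (simp add: lborel_prod)
  also have "\<dots> = (\<integral>\<^sup>+t. \<integral>\<^sup>+z. F (t, z) \<partial>lborel \<partial>lborel)"
    by (rule lborel.nn_integral_fst[symmetric]) (simp add: lborel_prod)
  also have "\<dots> = (\<integral>\<^sup>+t. \<integral>\<^sup>+w. G (t, w) \<partial>lborel \<partial>lborel)"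
  proof (rule nn_integral_cong_AE)
    show "AE t in lborel. (\<integral>\<^sup>+z. F (t, z) \<partial>lborel) = (\<integral>\<^sup>+w. G (t, w) \<partial>lborel)"
      using AE_lborel_singleton[of 0]
    proof eventually_elim
      case (elim t)
      have "(\<integral>\<^sup>+z. F (t, z) \<partial>lborel) = ennreal (\<bar>t\<bar> ^ m) * (\<integral>\<^sup>+w. F (t, t *\<^sub>R w) \<partial>lborel)"
        unfolding m_def by (rule nn_integral_scale) (use elim in auto)
      also have "\<dots> = (\<integral>\<^sup>+w. G (t, w) \<partial>lborel)"
      proof -
        have eq: "ennreal (\<bar>t\<bar> ^ m) * F (t, t *\<^sub>R w) = G (t, w)" for w
        proof -
          have nt: "norm (t, t *\<^sub>R w) = \<bar>t\<bar> * s w"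
            unfolding s_def norm_Pair
            by (simp add: power_mult_distrib distrib_left flip: real_sqrt_abs real_sqrt_mult)
          show ?thesis
          proof (cases "t > 0")
            case True
            have "(t, t *\<^sub>R w) \<in> ball 0 \<rho> \<longleftrightarrow> t < \<rho> / s w"
              using True s1[of w] nt by (simp only: mem_ball dist_0_norm) (simp add: pos_less_divide_eq mult.commute)
            then show ?thesis using True nt s1[of w]
              by (simp add: F_def G_def indicator_def ennreal_mult'[symmetric] power_abs)
          next
            case False
            then have "t < 0" using elim by auto
            then have "fst (t, t *\<^sub>R w) / norm (t, t *\<^sub>R w) \<le> 0" using nt s1[of w]
              by (simp add: divide_nonpos_nonneg)
            then show ?thesis using False
              by (simp add: F_def G_def neg)
          qed
        qed
        show ?thesis
          by (subst nn_integral_cmult[symmetric]) (auto simp: eq)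
      qed
      finally show ?case .
    qed
  qed
  also have "\<dots> = (\<integral>\<^sup>+w. \<integral>\<^sup>+t. G (t, w) \<partial>lborel \<partial>lborel)"
    by (rule lborel_pair.Fubini'[symmetric]) simp
  also have "\<dots> = (\<integral>\<^sup>+w. ennreal (\<phi> (1 / s w) * \<rho> ^ (m + 1) / (real (m + 1) * s w ^ (m + 1))) \<partial>lborel)"
  proof (rule nn_integral_cong)
    fix w :: 'a
    have "(\<integral>\<^sup>+t. G (t, w) \<partial>lborel) = (\<integral>\<^sup>+t. ennreal (t ^ m * \<phi> (1 / s w)) * indicator {0..\<rho> / s w} t \<partial>lborel)"
    proof (rule nn_integral_cong_AE)
      show "AE t in lborel. G (t, w) = ennreal (t ^ m * \<phi> (1 / s w)) * indicator {0..\<rho> / s w} t"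
        using AE_lborel_singleton[of 0] AE_lborel_singleton[of "\<rho> / s w"]
        by eventually_elim (auto simp: G_def indicator_def)
    qed
    also have "\<dots> = ennreal (\<phi> (1 / s w) * (\<rho> / s w) ^ (m + 1) / real (m + 1) - \<phi> (1 / s w) * 0 ^ (m + 1) / real (m + 1))"
    proof (rule nn_integral_FTC_Icc)
      show "0 \<le> \<rho> / s w" using \<rho> s1[of w] by simp
      fix t assume t: "t \<in> {0..\<rho> / s w}"
      have d: "((\<lambda>t. \<phi> (1 / s w) * t ^ (m + 1) / real (m + 1)) has_real_derivative \<phi> (1 / s w) * (real (m + 1) * t ^ m) / real (m + 1)) (at t)"
        by (intro DERIV_cdivide DERIV_cmult) (use DERIV_pow[of "m + 1" t] in simp)
      show "((\<lambda>t. \<phi> (1 / s w) * t ^ (m + 1) / real (m + 1)) has_real_derivative t ^ m * \<phi> (1 / s w)) (at t)"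
        using d by (simp del: of_nat_add add: mult.commute)
      show "0 \<le> t ^ m * \<phi> (1 / s w)" using t nn by simp
    qed simp
    also have "\<dots> = ennreal (\<phi> (1 / s w) * \<rho> ^ (m + 1) / (real (m + 1) * s w ^ (m + 1)))"
      by (simp add: power_divide mult.commute)
    finally show "(\<integral>\<^sup>+t. G (t, w) \<partial>lborel) = ennreal (\<phi> (1 / s w) * \<rho> ^ (m + 1) / (real (m + 1) * s w ^ (m + 1)))" .
  qed
  finally show ?thesis unfolding F_def s_def .
qed

lemma norm_sphere_point:
  fixes y :: "real \<times> 'a::euclidean_space"
  assumes "y \<noteq> 0"
  shows "norm ((r, 0::'a) - (\<rho> / norm y) *\<^sub>R y) = sqrt (r\<^sup>2 + \<rho>\<^sup>2 - 2 * r * \<rho> * (fst y / norm y))"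
proof -
  obtain t z where y: "y = (t, z)" by (cases y)
  have n: "(norm y)\<^sup>2 = t\<^sup>2 + (norm z)\<^sup>2" unfolding y norm_Pair by simp
  have np: "norm y > 0" using assms by simp
  have "(norm ((r, 0::'a) - (\<rho> / norm y) *\<^sub>R y))\<^sup>2 = (r - \<rho> / norm y * t)\<^sup>2 + (\<rho> / norm y)\<^sup>2 * (norm z)\<^sup>2"
    unfolding y by (simp add: norm_Pair power_mult_distrib power_divide power2_abs)
  also have "\<dots> = r\<^sup>2 + \<rho>\<^sup>2 * ((t\<^sup>2 + (norm z)\<^sup>2) / (norm y)\<^sup>2) - 2 * r * \<rho> * (t / norm y)"
    using np by (simp add: power2_eq_square field_simps)
  also have "\<dots> = r\<^sup>2 + \<rho>\<^sup>2 - 2 * r * \<rho> * (fst y / norm y)"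
    using np by (simp add: n[symmetric] y)
  finally have e: "(norm ((r, 0::'a) - (\<rho> / norm y) *\<^sub>R y))\<^sup>2 = r\<^sup>2 + \<rho>\<^sup>2 - 2 * r * \<rho> * (fst y / norm y)" .
  show ?thesis using arg_cong[OF e, of sqrt] by simp
qed

lemma ennreal_mult3: "0 \<le> a \<Longrightarrow> 0 \<le> b \<Longrightarrow> 0 \<le> c \<Longrightarrow> ennreal a * (ennreal b * ennreal c) = ennreal (a * b * c)"
  by (simp add: ennreal_mult mult.assoc)

lemma aux_id:
  fixes A F Q S \<rho> :: real assumes "A > 0" "\<rho> > 0" "S > 0"
  shows "A / \<rho> * (F * \<rho> ^ (m + 1) / (A * S ^ (m + 1))) * Q = F * \<rho> ^ m / S ^ (m + 1) * Q"
  using assms by (simp add: field_simps)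

lemma Jtilde_formula:
  fixes x :: "real \<times> 'a::euclidean_space"
  assumes cJ: "continuous_on {0..} J" and nn: "\<forall>r\<ge>0. J r \<ge> 0" and van: "\<forall>t\<ge>K. J t = 0"
    and rK: "r \<ge> K" and \<rho>: "\<rho> > 0" and nx: "norm x = r"
  defines "m \<equiv> DIM('a)"
  shows "Jtilde J x \<rho> = enn2real (\<integral>\<^sup>+a. ennreal (J0 J (sqrt (r\<^sup>2 + \<rho>\<^sup>2 - 2 * r * \<rho> / sqrt (1 + a\<^sup>2))) *
      \<rho> ^ m / sqrt (1 + a\<^sup>2) ^ (m + 1) * (real m * unit_ball_vol (real m) * a ^ (m - 1))) * indicator {0..} a \<partial>lborel)"
proof -
  define \<phi> where "\<phi> c = J0 J (sqrt (r\<^sup>2 + \<rho>\<^sup>2 - 2 * r * \<rho> * c))" for c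
  note [measurable] = J0_meas[OF cJ]
  have J0nn: "J0 J t \<ge> 0" for t using nn by (simp add: J0_def)
  have J0van: "t \<ge> K \<Longrightarrow> J0 J t = 0" for t using van by (simp add: J0_def)
  have r0: "r \<ge> 0" using nx by auto
  have \<phi>m[measurable]: "\<phi> \<in> borel_measurable borel" unfolding \<phi>_def by measurable
  have \<phi>nn: "\<phi> c \<ge> 0" for c by (simp add: \<phi>_def J0nn)
  have \<phi>neg: "\<phi> c = 0" if "c \<le> 0" for c
  proof -
    have "0 \<le> r * \<rho>" using r0 \<rho> by simp
    then have "r * \<rho> * c \<le> 0" using that by (simp add: mult_nonneg_nonpos)
    moreover have "0 \<le> \<rho>\<^sup>2" by simp
    ultimately have "r\<^sup>2 \<le> r\<^sup>2 + \<rho>\<^sup>2 - 2 * r * \<rho> * c" by linarith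
    then have "sqrt (r\<^sup>2) \<le> sqrt (r\<^sup>2 + \<rho>\<^sup>2 - 2 * r * \<rho> * c)" by (rule real_sqrt_le_mono)
    then have "K \<le> sqrt (r\<^sup>2 + \<rho>\<^sup>2 - 2 * r * \<rho> * c)" using rK r0 by simp
    then show ?thesis by (simp add: \<phi>_def J0van)
  qed
  have DIM: "real DIM(real \<times> 'a) = real (m + 1)" by (simp add: m_def)
  have "Jtilde J x \<rho> = real (m + 1) / \<rho> *
    enn2real (\<integral>\<^sup>+y. ennreal (indicator (ball 0 \<rho>) y * J0 J (norm ((r, 0::'a) - (\<rho> / norm y) *\<^sub>R y))) \<partial>lborel)"
    using Jtilde_nn[OF cJ nn nx, of \<rho>] DIM by simp
  also have "(\<integral>\<^sup>+y. ennreal (indicator (ball 0 \<rho>) y * J0 J (norm ((r, 0::'a) - (\<rho> / norm y) *\<^sub>R y))) \<partial>lborel) =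
    (\<integral>\<^sup>+y. ennreal (indicator (ball 0 \<rho>) y * \<phi> (fst y / norm y)) \<partial>(lborel::(real\<times>'a) measure))"
  proof (rule nn_integral_cong_AE)
    show "AE y in lborel. ennreal (indicator (ball 0 \<rho>) y * J0 J (norm ((r, 0::'a) - (\<rho> / norm y) *\<^sub>R y))) =
      ennreal (indicator (ball 0 \<rho>) y * \<phi> (fst y / norm y))"
      using AE_lborel_singleton[of "0::real\<times>'a"]
      by eventually_elim (simp add: norm_sphere_point \<phi>_def)
  qed
  also have "\<dots> = (\<integral>\<^sup>+w. ennreal (\<phi> (1 / sqrt (1 + (norm (w::'a))\<^sup>2)) * \<rho> ^ (m + 1) / (real (m + 1) * sqrt (1 + (norm w)\<^sup>2) ^ (m + 1))) \<partial>lborel)"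
    unfolding m_def by (rule ball_cone_integral[OF \<rho> \<phi>m \<phi>nn \<phi>neg])
  also have "\<dots> = (\<integral>\<^sup>+a. ennreal (\<phi> (1 / sqrt (1 + a\<^sup>2)) * \<rho> ^ (m + 1) / (real (m + 1) * sqrt (1 + a\<^sup>2) ^ (m + 1)))
      * ennreal (real m * unit_ball_vol (real m) * a ^ (m - 1)) * indicator {0..} a \<partial>lborel)"
    unfolding m_def by (rule nn_integral_radial[where g="\<lambda>a. ennreal (\<phi> (1 / sqrt (1 + a\<^sup>2)) * \<rho> ^ (DIM('a) + 1) / (real (DIM('a) + 1) * sqrt (1 + a\<^sup>2) ^ (DIM('a) + 1)))"]) measurable
  finally have "Jtilde J x \<rho> = real (m + 1) / \<rho> * enn2real (\<integral>\<^sup>+a. ennreal (\<phi> (1 / sqrt (1 + a\<^sup>2)) * \<rho> ^ (m + 1) / (real (m + 1) * sqrt (1 + a\<^sup>2) ^ (m + 1)))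
      * ennreal (real m * unit_ball_vol (real m) * a ^ (m - 1)) * indicator {0..} a \<partial>lborel)" .
  also have "\<dots> = enn2real (ennreal (real (m + 1) / \<rho>) * (\<integral>\<^sup>+a. ennreal (\<phi> (1 / sqrt (1 + a\<^sup>2)) * \<rho> ^ (m + 1) / (real (m + 1) * sqrt (1 + a\<^sup>2) ^ (m + 1)))
      * ennreal (real m * unit_ball_vol (real m) * a ^ (m - 1)) * indicator {0..} a \<partial>lborel))"
    using \<rho> by (simp add: enn2real_mult)
  also have "ennreal (real (m + 1) / \<rho>) * (\<integral>\<^sup>+a. ennreal (\<phi> (1 / sqrt (1 + a\<^sup>2)) * \<rho> ^ (m + 1) / (real (m + 1) * sqrt (1 + a\<^sup>2) ^ (m + 1)))
      * ennreal (real m * unit_ball_vol (real m) * a ^ (m - 1)) * indicator {0..} a \<partial>lborel) =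
    (\<integral>\<^sup>+a. ennreal (real (m + 1) / \<rho>) * (ennreal (\<phi> (1 / sqrt (1 + a\<^sup>2)) * \<rho> ^ (m + 1) / (real (m + 1) * sqrt (1 + a\<^sup>2) ^ (m + 1)))
      * ennreal (real m * unit_ball_vol (real m) * a ^ (m - 1)) * indicator {0..} a) \<partial>lborel)"
    by (rule nn_integral_cmult[symmetric]) measurable
  also have "\<dots> = (\<integral>\<^sup>+a. ennreal (J0 J (sqrt (r\<^sup>2 + \<rho>\<^sup>2 - 2 * r * \<rho> / sqrt (1 + a\<^sup>2))) *
      \<rho> ^ m / sqrt (1 + a\<^sup>2) ^ (m + 1) * (real m * unit_ball_vol (real m) * a ^ (m - 1))) * indicator {0..} a \<partial>lborel)"
  proof (rule nn_integral_cong)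
    fix a :: real
    have pos: "0 \<le> \<phi> (1 / sqrt (1 + a\<^sup>2)) * \<rho> ^ (m + 1) / (real (m + 1) * sqrt (1 + a\<^sup>2) ^ (m + 1))"
      using \<phi>nn \<rho> by simp
    show "ennreal (real (m + 1) / \<rho>) * (ennreal (\<phi> (1 / sqrt (1 + a\<^sup>2)) * \<rho> ^ (m + 1) / (real (m + 1) * sqrt (1 + a\<^sup>2) ^ (m + 1)))
      * ennreal (real m * unit_ball_vol (real m) * a ^ (m - 1)) * indicator {0..} a) =
      ennreal (J0 J (sqrt (r\<^sup>2 + \<rho>\<^sup>2 - 2 * r * \<rho> / sqrt (1 + a\<^sup>2))) *
      \<rho> ^ m / sqrt (1 + a\<^sup>2) ^ (m + 1) * (real m * unit_ball_vol (real m) * a ^ (m - 1))) * indicator {0..} a"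
    proof (cases "a \<ge> 0")
      case True
      have "ennreal (real (m + 1) / \<rho>) * (ennreal (\<phi> (1 / sqrt (1 + a\<^sup>2)) * \<rho> ^ (m + 1) / (real (m + 1) * sqrt (1 + a\<^sup>2) ^ (m + 1)))
      * ennreal (real m * unit_ball_vol (real m) * a ^ (m - 1))) = ennreal (real (m + 1) / \<rho> * (\<phi> (1 / sqrt (1 + a\<^sup>2)) * \<rho> ^ (m + 1) / (real (m + 1) * sqrt (1 + a\<^sup>2) ^ (m + 1)))
      * (real m * unit_ball_vol (real m) * a ^ (m - 1)))"
        by (rule ennreal_mult3) (use pos \<rho> True in auto)
      also have "real (m + 1) / \<rho> * (\<phi> (1 / sqrt (1 + a\<^sup>2)) * \<rho> ^ (m + 1) / (real (m + 1) * sqrt (1 + a\<^sup>2) ^ (m + 1)))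
      * (real m * unit_ball_vol (real m) * a ^ (m - 1)) = J0 J (sqrt (r\<^sup>2 + \<rho>\<^sup>2 - 2 * r * \<rho> / sqrt (1 + a\<^sup>2))) *
      \<rho> ^ m / sqrt (1 + a\<^sup>2) ^ (m + 1) * (real m * unit_ball_vol (real m) * a ^ (m - 1))"
        using aux_id[of "real (m + 1)" \<rho> "sqrt (1 + a\<^sup>2)" "\<phi> (1 / sqrt (1 + a\<^sup>2))" m "real m * unit_ball_vol (real m) * a ^ (m - 1)"] \<rho>
        by (simp add: \<phi>_def del: of_nat_add)
      finally show ?thesis using True by (simp add: mult.assoc)
    qed simp
  qed
  finally show ?thesis .
qed

lemma Jstar_formula:
  assumes cJ: "continuous_on {0..} J" and nn: "\<forall>r\<ge>0. J r \<ge> 0"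
  defines "m \<equiv> DIM('a::euclidean_space)"
  shows "Jstar TYPE('a) J l = enn2real (\<integral>\<^sup>+u. ennreal (J0 J (sqrt (l\<^sup>2 + u\<^sup>2)) *
      (real m * unit_ball_vol (real m) * u ^ (m - 1))) * indicator {0..} u \<partial>lborel)"
proof -
  note [measurable] = J0_meas[OF cJ]
  have J0nn: "J0 J t \<ge> 0" for t using nn by (simp add: J0_def)
  have "Jstar TYPE('a) J l = (\<integral>x'. J0 J (sqrt (l\<^sup>2 + (norm (x'::'a))\<^sup>2)) \<partial>lborel)"
    unfolding Jstar_def by (simp add: norm_Pair J0_eq)
  also have "\<dots> = enn2real (\<integral>\<^sup>+x'. ennreal (J0 J (sqrt (l\<^sup>2 + (norm (x'::'a))\<^sup>2))) \<partial>lborel)"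
    by (rule integral_eq_nn_integral) (auto simp: J0nn)
  also have "(\<integral>\<^sup>+x'. ennreal (J0 J (sqrt (l\<^sup>2 + (norm (x'::'a))\<^sup>2))) \<partial>lborel) =
     (\<integral>\<^sup>+u. ennreal (J0 J (sqrt (l\<^sup>2 + u\<^sup>2))) * ennreal (real m * unit_ball_vol (real m) * u ^ (m - 1)) * indicator {0..} u \<partial>lborel)"
    unfolding m_def by (rule nn_integral_radial[where g="\<lambda>u. ennreal (J0 J (sqrt (l\<^sup>2 + u\<^sup>2)))"]) measurable
  also have "\<dots> = (\<integral>\<^sup>+u. ennreal (J0 J (sqrt (l\<^sup>2 + u\<^sup>2)) * (real m * unit_ball_vol (real m) * u ^ (m - 1))) * indicator {0..} u \<partial>lborel)"
  proof (rule nn_integral_cong)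
    fix u :: real
    show "ennreal (J0 J (sqrt (l\<^sup>2 + u\<^sup>2))) * ennreal (real m * unit_ball_vol (real m) * u ^ (m - 1)) * indicator {0..} u =
      ennreal (J0 J (sqrt (l\<^sup>2 + u\<^sup>2)) * (real m * unit_ball_vol (real m) * u ^ (m - 1))) * indicator {0..} u"
      by (cases "u \<ge> 0") (auto simp: ennreal_mult J0nn)
  qed
  finally show ?thesis .
qed

lemma pow_chord: fixes x :: real assumes "0 \<le> x" "x \<le> 1" shows "(1 + x) ^ n \<le> 1 + (2 ^ n - 1) * x"
proof (induction n)
  case 0 then show ?case by simp
next
  case (Suc n)
  have "(1 + x) ^ Suc n = (1 + x) * (1 + x) ^ n" by simp
  also have "\<dots> \<le> (1 + x) * (1 + (2 ^ n - 1) * x)" using Suc assms by (intro mult_left_mono) auto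
  also have "\<dots> = 1 + 2 ^ n * x + (2 ^ n - 1) * x * x" by (simp add: algebra_simps)
  also have "\<dots> \<le> 1 + 2 ^ n * x + (2 ^ n - 1) * x"
  proof -
    have "(2::real) ^ n \<ge> 1" by simp
    then have "(2 ^ n - 1) * x * x \<le> (2 ^ n - 1) * x * 1" using assms by (intro mult_left_mono) auto
    then show ?thesis by simp
  qed
  also have "\<dots> = 1 + (2 ^ Suc n - 1) * x" by (simp add: algebra_simps)
  finally show ?case .
qed

lemma R_bounds:
  fixes p q \<delta> :: real
  assumes d: "0 \<le> \<delta>" "\<delta> \<le> 1/2" and p: "\<bar>p - 1\<bar> \<le> \<delta>" and q: "q > 0" "\<bar>q\<^sup>2 - 1\<bar> \<le> \<delta>"
  shows "\<bar>p * q ^ m / q\<^sup>2 - 1\<bar> \<le> 2 ^ (m + 3) * \<delta>"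
proof -
  have qu: "q \<le> 1 + \<delta>"
  proof (cases "q \<le> 1")
    case False then have "q \<le> q\<^sup>2" by (simp add: power2_eq_square)
    then show ?thesis using q by linarith
  qed (use d in auto)
  have ql: "1 - \<delta> \<le> q"
  proof (cases "q \<ge> 1")
    case False then have "q\<^sup>2 \<le> q" using q by (simp add: power2_eq_square mult_le_cancel_right1)
    then show ?thesis using q by linarith
  qed (use d in auto)
  have q2l: "1 - \<delta> \<le> q\<^sup>2" "q\<^sup>2 \<le> 1 + \<delta>" using q by auto
  have pos: "0 < 1 - \<delta>" using d by simp
  have "p * q ^ m / q\<^sup>2 \<le> (1 + 2 * \<delta>) * (1 + 2 * \<delta>) ^ m * (1 + 2 * \<delta>)"
  proof -
    have "p \<le> 1 + 2 * \<delta>" using p d by linarith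
    moreover have "q ^ m \<le> (1 + 2 * \<delta>) ^ m" using qu q d by (intro power_mono) auto
    moreover have "1 / q\<^sup>2 \<le> 1 + 2 * \<delta>"
    proof -
      have "1 / q\<^sup>2 \<le> 1 / (1 - \<delta>)" using q2l pos q by (intro divide_left_mono) auto
      also have "\<dots> \<le> 1 + 2 * \<delta>"
      proof -
        have h: "0 \<le> \<delta> * (1 - 2 * \<delta>)" using d by simp
        have "1 \<le> (1 + 2 * \<delta>) * (1 - \<delta>)" using h by (simp add: algebra_simps)
        then show ?thesis using pos by (simp add: divide_le_eq)
      qed
      finally show ?thesis .
    qed
    moreover have "p \<ge> 0" using p d by linarith
    ultimately have "p * q ^ m * (1 / q\<^sup>2) \<le> (1 + 2 * \<delta>) * (1 + 2 * \<delta>) ^ m * (1 + 2 * \<delta>)"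
      using q d by (intro mult_mono) (auto intro: mult_nonneg_nonneg)
    then show ?thesis by simp
  qed
  also have "\<dots> = (1 + 2 * \<delta>) ^ (m + 2)" by (simp add: power_add power2_eq_square)
  also have "\<dots> \<le> 1 + (2 ^ (m + 2) - 1) * (2 * \<delta>)" using d by (intro pow_chord) auto
  also have "\<dots> \<le> 1 + 2 ^ (m + 3) * \<delta>" using d by (simp add: algebra_simps power_add)
  finally have up: "p * q ^ m / q\<^sup>2 - 1 \<le> 2 ^ (m + 3) * \<delta>" by simp
  have "(1 - \<delta>) ^ (m + 2) = (1 - \<delta>) * (1 - \<delta>) ^ m * (1 - \<delta>)" by (simp add: power_add power2_eq_square)
  also have "\<dots> \<le> p * q ^ m / q\<^sup>2"
  proof -
    have "1 - \<delta> \<le> p" using p by linarith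
    moreover have "(1 - \<delta>) ^ m \<le> q ^ m" using ql pos by (intro power_mono) auto
    moreover have "1 - \<delta> \<le> 1 / q\<^sup>2"
    proof -
      have "(1 - \<delta>) * (1 + \<delta>) \<le> 1" by (simp add: algebra_simps)
      then have "1 - \<delta> \<le> 1 / (1 + \<delta>)" using d by (simp add: le_divide_eq)
      also have "\<dots> \<le> 1 / q\<^sup>2" using q2l q by (intro divide_left_mono) auto
      finally show ?thesis .
    qed
    ultimately have "(1 - \<delta>) * (1 - \<delta>) ^ m * (1 - \<delta>) \<le> p * q ^ m * (1 / q\<^sup>2)"
      using pos q by (intro mult_mono) (auto intro!: mult_nonneg_nonneg)
    then show ?thesis by simp
  qed
  finally have "(1 - \<delta>) ^ (m + 2) \<le> p * q ^ m / q\<^sup>2" .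
  moreover have "1 + real (m + 2) * (- \<delta>) \<le> (1 + - \<delta>) ^ (m + 2)"
    by (rule Bernoulli_inequality) (use d in auto)
  moreover have "real (m + 2) \<le> 2 ^ (m + 3)"
  proof -
    have "m + 2 < 2 ^ (m + 2)" by (rule less_exp)
    then have "real (m + 2) \<le> 2 ^ (m + 2)" by (metis less_imp_le of_nat_le_iff of_nat_numeral of_nat_power)
    also have "(2::real) ^ (m + 2) \<le> 2 ^ (m + 3)" by (intro power_increasing) auto
    finally show ?thesis .
  qed
  ultimately have lo: "1 - p * q ^ m / q\<^sup>2 \<le> 2 ^ (m + 3) * \<delta>" using d
    by simp (smt (verit) mult_right_mono)
  show ?thesis using up lo by linarith
qed

lemma alg_g:
  fixes a s k r \<rho> :: real
  assumes s: "s > 0" and k: "k > 0" and kk: "k\<^sup>2 = 2 * r * \<rho> / (s * (1 + s))" and as: "a\<^sup>2 = s\<^sup>2 - 1"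
  shows "k + (inverse k / 2 * (- (2 * r * \<rho> * ((a / s) * (1 + s) + s * (a / s))) / (s * (1 + s))\<^sup>2)) * a = r * \<rho> / (s ^ 3 * k)"
proof -
  have s1: "1 + s > 0" using s by simp
  have e1: "(a / s) * (1 + s) + s * (a / s) = a * (1 + 2 * s) / s" using s by (simp add: field_simps)
  have a2: "a\<^sup>2 = (s - 1) * (s + 1)" using as by (simp add: algebra_simps power2_eq_square)
  define Y where "Y = - (2 * r * \<rho> * (a * (1 + 2 * s) / s)) / (s * (1 + s))\<^sup>2"
  have y1: "k * (k + (inverse k / 2 * Y) * a) = k\<^sup>2 + Y * a / 2"
    using k by (simp add: algebra_simps power2_eq_square)
  have y2: "Y * a / 2 = - (r * \<rho> * a\<^sup>2 * (1 + 2 * s) / (s ^ 3 * (1 + s)\<^sup>2))"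
    unfolding Y_def using s s1 by (simp add: divide_simps power2_eq_square power3_eq_cube)
  have "k * (k + (inverse k / 2 * (- (2 * r * \<rho> * (a * (1 + 2 * s) / s)) / (s * (1 + s))\<^sup>2)) * a)
      = k\<^sup>2 - r * \<rho> * a\<^sup>2 * (1 + 2 * s) / (s ^ 3 * (1 + s)\<^sup>2)"
    using y1 y2 unfolding Y_def by simp
  also have "\<dots> = 2 * r * \<rho> / (s * (1 + s)) - r * \<rho> * ((s - 1) * (s + 1)) * (1 + 2 * s) / (s ^ 3 * (1 + s)\<^sup>2)"
    by (simp only: kk a2)
  also have "\<dots> = r * \<rho> / s ^ 3"
    using s s1 apply (simp add: divide_simps) by algebra
  finally have "k * (k + (inverse k / 2 * (- (2 * r * \<rho> * (a * (1 + 2 * s) / s)) / (s * (1 + s))\<^sup>2)) * a) = r * \<rho> / s ^ 3" .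
  then have "k + (inverse k / 2 * (- (2 * r * \<rho> * (a * (1 + 2 * s) / s)) / (s * (1 + s))\<^sup>2)) * a = (r * \<rho> / s ^ 3) / k"
    using k by (metis divide_eq_eq less_irrefl mult.commute)
  then show ?thesis unfolding e1 by simp
qed

definition gk :: "real \<Rightarrow> real \<Rightarrow> real \<Rightarrow> real" where
  "gk r \<rho> a = sqrt (2 * r * \<rho> / (sqrt (1 + a\<^sup>2) * (1 + sqrt (1 + a\<^sup>2))))"
definition gg :: "real \<Rightarrow> real \<Rightarrow> real \<Rightarrow> real" where
  "gg r \<rho> a = a * gk r \<rho> a"
definition gd :: "real \<Rightarrow> real \<Rightarrow> real \<Rightarrow> real" where
  "gd r \<rho> a = r * \<rho> / (sqrt (1 + a\<^sup>2) ^ 3 * gk r \<rho> a)"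

lemma gg_deriv:
  assumes r: "r > 0" and \<rho>: "\<rho> > 0"
  shows "(gg r \<rho> has_real_derivative gd r \<rho> a) (at a)"
proof -
  define s where "s = sqrt (1 + a\<^sup>2)"
  have s: "s > 0" "s\<^sup>2 = 1 + a\<^sup>2" unfolding s_def by (auto simp: add_pos_nonneg)
  have ds: "((\<lambda>x. sqrt (1 + x\<^sup>2)) has_real_derivative a / s) (at a)"
  proof -
    have pa: "0 < 1 + a\<^sup>2" by (simp add: add_pos_nonneg)
    show ?thesis using s pa by (auto intro!: derivative_eq_intros simp: s_def field_simps)
  qed
  have dg: "((\<lambda>x. sqrt (1 + x\<^sup>2) * (1 + sqrt (1 + x\<^sup>2))) has_real_derivative (a / s) * (1 + s) + s * (a / s)) (at a)"
    using DERIV_mult[OF ds DERIV_add[OF DERIV_const ds]] by (simp add: s_def mult.commute)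
  have gne: "sqrt (1 + a\<^sup>2) * (1 + sqrt (1 + a\<^sup>2)) \<noteq> 0"
  proof -
    have h: "sqrt (1 + a\<^sup>2) > 0" using s(1) by (simp add: s_def)
    then have "sqrt (1 + a\<^sup>2) * (1 + sqrt (1 + a\<^sup>2)) > 0" by (simp add: add_pos_pos)
    then show ?thesis by (metis less_irrefl)
  qed
  have dQ: "((\<lambda>x. 2 * r * \<rho> / (sqrt (1 + x\<^sup>2) * (1 + sqrt (1 + x\<^sup>2)))) has_real_derivative
      - (2 * r * \<rho> * ((a / s) * (1 + s) + s * (a / s))) / (s * (1 + s))\<^sup>2) (at a)"
    using DERIV_divide[OF DERIV_const dg gne] by (simp add: s_def power2_eq_square)
  define Q where "Q = 2 * r * \<rho> / (s * (1 + s))"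
  have Q: "Q > 0" using s r \<rho> by (simp add: Q_def add_pos_nonneg)
  have dk: "(gk r \<rho> has_real_derivative inverse (sqrt Q) / 2 * (- (2 * r * \<rho> * ((a / s) * (1 + s) + s * (a / s))) / (s * (1 + s))\<^sup>2)) (at a)"
    unfolding gk_def[abs_def] using DERIV_chain2[OF DERIV_real_sqrt dQ] Q by (simp add: Q_def s_def)
  have "(gg r \<rho> has_real_derivative 1 * gk r \<rho> a + inverse (sqrt Q) / 2 * (- (2 * r * \<rho> * ((a / s) * (1 + s) + s * (a / s))) / (s * (1 + s))\<^sup>2) * a) (at a)"
    unfolding gg_def[abs_def] by (rule DERIV_mult[OF DERIV_ident dk])
  moreover have "1 * gk r \<rho> a + inverse (sqrt Q) / 2 * (- (2 * r * \<rho> * ((a / s) * (1 + s) + s * (a / s))) / (s * (1 + s))\<^sup>2) * a = gd r \<rho> a"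
  proof -
    have k: "gk r \<rho> a = sqrt Q" by (simp add: gk_def Q_def s_def)
    have "sqrt Q + inverse (sqrt Q) / 2 * (- (2 * r * \<rho> * ((a / s) * (1 + s) + s * (a / s))) / (s * (1 + s))\<^sup>2) * a = r * \<rho> / (s ^ 3 * sqrt Q)"
      by (rule alg_g) (use s Q in \<open>auto simp: Q_def\<close>)
    then show ?thesis by (simp add: k gd_def s_def)
  qed
  ultimately show ?thesis by simp
qed

lemma R_ident:
  fixes \<rho> r s k a \<psi> c :: real
  assumes "\<rho> > 0" "r > 0" "s > 0" "k > 0"
  shows "\<psi> * \<rho> ^ Suc n / s ^ (Suc n + 1) * (c * a ^ n) =
    (\<rho> / r) * (\<rho> / (s * k)) ^ Suc n / (\<rho> / (s * k))\<^sup>2 * (\<psi> * (c * (a * k) ^ n) * (r * \<rho> / (s ^ 3 * k)))"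
  using assms by (simp add: field_simps power_mult_distrib power2_eq_square power3_eq_cube)

lemma pointwise_cmp:
  fixes r \<rho> K a \<psi> c0 :: real
  assumes r1: "r \<ge> 1" and rK: "r \<ge> 2 * (K + K\<^sup>2)" and \<rho>r: "\<bar>\<rho> - r\<bar> \<le> K" and K: "K > 0"
    and a: "0 \<le> a" and m: "m \<ge> 1" and c0: "c0 \<ge> 0" and \<psi>: "\<psi> \<ge> 0"
    and h\<psi>: "\<psi> \<noteq> 0 \<Longrightarrow> r\<^sup>2 + \<rho>\<^sup>2 - 2 * r * \<rho> / sqrt (1 + a\<^sup>2) < K\<^sup>2"
  defines "\<epsilon> \<equiv> 2 ^ (m + 3) * ((K + K\<^sup>2) / r)"
  defines "A \<equiv> \<psi> * \<rho> ^ m / sqrt (1 + a\<^sup>2) ^ (m + 1) * (c0 * a ^ (m - 1))"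
  defines "B \<equiv> \<psi> * (c0 * (gg r \<rho> a) ^ (m - 1)) * gd r \<rho> a"
  shows "A \<le> (1 + \<epsilon>) * B \<and> B \<le> A + \<epsilon> * B \<and> 0 \<le> B"
proof (cases "\<psi> = 0")
  case True then show ?thesis by (simp add: A_def B_def)
next
  case False
  define \<delta> where "\<delta> = (K + K\<^sup>2) / r"
  define s where "s = sqrt (1 + a\<^sup>2)"
  define k where "k = gk r \<rho> a"
  have r0: "r > 0" using r1 by simp
  have \<rho>0: "\<rho> \<ge> r / 2"
  proof -
    have "2 * K + 2 * K\<^sup>2 \<le> r" using rK by (simp add: distrib_left)
    moreover have "0 \<le> K\<^sup>2" by simp
    ultimately have "K \<le> r / 2" by linarith
    then show ?thesis using \<rho>r by linarith
  qed
  have \<rho>pos: "\<rho> > 0" using \<rho>0 r0 by linarith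
  have s1: "s \<ge> 1" by (simp add: s_def)
  have spos: "s > 0" using s1 by simp
  have kk: "k\<^sup>2 = 2 * r * \<rho> / (s * (1 + s))" unfolding k_def gk_def s_def
    using r0 \<rho>pos s1 by (simp add: s_def add_pos_nonneg)
  have kpos: "k > 0" unfolding k_def gk_def using r0 \<rho>pos spos by (simp add: s_def[symmetric] add_pos_pos)
  define q where "q = \<rho> / (s * k)"
  have qpos: "q > 0" using \<rho>pos spos kpos by (simp add: q_def)
  define \<theta> where "\<theta> = (1 + s) / (2 * s)"
  have q2: "q\<^sup>2 = (\<rho> / r) * \<theta>"
  proof -
    have "q\<^sup>2 = \<rho>\<^sup>2 / (s\<^sup>2 * k\<^sup>2)" by (simp add: q_def power_divide power_mult_distrib)
    also have "\<dots> = \<rho>\<^sup>2 / (s\<^sup>2 * (2 * r * \<rho> / (s * (1 + s))))" by (simp only: kk)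
    also have "\<dots> = (\<rho> / r) * \<theta>" unfolding \<theta>_def using spos r0 \<rho>pos
      by (simp add: field_simps power2_eq_square)
    finally show ?thesis .
  qed
  have th1: "\<theta> \<le> 1" using s1 by (simp add: \<theta>_def divide_le_eq)
  have th0: "1 - \<theta> \<le> K\<^sup>2 / (2 * r)"
  proof -
    have e: "r\<^sup>2 + \<rho>\<^sup>2 - 2 * r * \<rho> / s = (r - \<rho>)\<^sup>2 + 4 * r * \<rho> * (1 - \<theta>)"
      unfolding \<theta>_def using spos by (simp add: field_simps power2_eq_square)
    have h: "r\<^sup>2 + \<rho>\<^sup>2 - 2 * r * \<rho> / s < K\<^sup>2"
      using h\<psi>[OF False] unfolding s_def by simp
    have "0 \<le> (r - \<rho>)\<^sup>2" by simp
    then have "4 * r * \<rho> * (1 - \<theta>) < K\<^sup>2" using h e by linarith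
    then have "1 - \<theta> < K\<^sup>2 / (4 * r * \<rho>)" using r0 \<rho>pos by (simp add: field_simps)
    also have "\<dots> \<le> K\<^sup>2 / (2 * r)" using r0 \<rho>0 r1 by (intro divide_left_mono) auto
    finally show ?thesis by simp
  qed
  have th_lo: "\<theta> \<ge> 0" using spos by (simp add: \<theta>_def)
  have Kr: "K / r \<le> \<delta>" "K\<^sup>2 / (2 * r) \<le> \<delta>" using r0 K
    by (auto simp: \<delta>_def divide_right_mono field_simps)
  have d0: "0 \<le> \<delta>" using K r0 by (simp add: \<delta>_def)
  have d12: "\<delta> \<le> 1/2" using rK r0 by (simp add: \<delta>_def field_simps)
  have p: "\<bar>\<rho> / r - 1\<bar> \<le> \<delta>"
  proof -
    have e: "\<rho> / r - 1 = (\<rho> - r) / r" using r0 by (simp add: field_simps)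
    have "\<bar>\<rho> / r - 1\<bar> = \<bar>\<rho> - r\<bar> / r" unfolding e using r0 by (simp add: abs_divide)
    also have "\<dots> \<le> K / r" using \<rho>r r0 by (simp add: divide_right_mono)
    finally show ?thesis using Kr by simp
  qed
  have pl: "\<rho> / r \<ge> 1 - K / r" "\<rho> / r \<le> 1 + K / r"
  proof -
    have "r - K \<le> \<rho>" "\<rho> \<le> r + K" using \<rho>r by auto
    then have "(r - K) / r \<le> \<rho> / r" "\<rho> / r \<le> (r + K) / r" using r0 by (auto intro: divide_right_mono)
    moreover have "(r - K) / r = 1 - K / r" "(r + K) / r = 1 + K / r" using r0 by (auto simp: field_simps)
    ultimately show "\<rho> / r \<ge> 1 - K / r" "\<rho> / r \<le> 1 + K / r" by auto
  qed
  have q2b: "\<bar>q\<^sup>2 - 1\<bar> \<le> \<delta>"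
  proof -
    have up: "q\<^sup>2 \<le> 1 + \<delta>"
    proof -
      have "q\<^sup>2 \<le> \<rho> / r" unfolding q2 by (rule mult_left_le) (use th1 \<rho>pos r0 in auto)
      then show ?thesis using p by linarith
    qed
    have lo: "1 - \<delta> \<le> q\<^sup>2"
    proof -
      have "(1 - K / r) * (1 - K\<^sup>2 / (2 * r)) \<le> (\<rho> / r) * \<theta>"
      proof (rule mult_mono)
        show "1 - K / r \<le> \<rho> / r" using pl by simp
        show "1 - K\<^sup>2 / (2 * r) \<le> \<theta>" using th0 by linarith
        show "0 \<le> \<rho> / r" using \<rho>pos r0 by simp
        show "0 \<le> 1 - K\<^sup>2 / (2 * r)" using Kr d12 by linarith
      qed
      moreover have "(1 - K / r) * (1 - K\<^sup>2 / (2 * r)) \<ge> 1 - K / r - K\<^sup>2 / (2 * r)"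
      proof -
        have gen: "\<And>x y::real. 0 \<le> x * y \<Longrightarrow> 1 - x - y \<le> (1 - x) * (1 - y)" by (simp add: algebra_simps)
        have "0 \<le> (K / r) * (K\<^sup>2 / (2 * r))" using K r0 by simp
        then show ?thesis by (rule gen)
      qed
      moreover have "K / r + K\<^sup>2 / (2 * r) \<le> \<delta>"
        using r0 K unfolding \<delta>_def by (simp add: field_simps)
      ultimately show ?thesis unfolding q2 by linarith
    qed
    show ?thesis using up lo by linarith
  qed
  have Rb: "\<bar>(\<rho> / r) * q ^ m / q\<^sup>2 - 1\<bar> \<le> 2 ^ (m + 3) * \<delta>"
    by (rule R_bounds[OF d0 d12 p qpos q2b])
  obtain n where n: "m = Suc n" using m by (cases m) auto
  have gg: "gg r \<rho> a = a * k" by (simp add: gg_def k_def)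
  have gd: "gd r \<rho> a = r * \<rho> / (s ^ 3 * k)" by (simp add: gd_def k_def s_def)
  have AR: "A = ((\<rho> / r) * q ^ m / q\<^sup>2) * B"
    unfolding A_def B_def gg gd q_def n s_def[symmetric]
    using R_ident[OF \<rho>pos r0 spos kpos, of \<psi> n c0 a] by (simp add: mult.assoc)
  have B0: "0 \<le> B" unfolding B_def gg gd using \<psi> c0 a kpos r0 \<rho>pos spos by simp
  define R where "R = (\<rho> / r) * q ^ m / q\<^sup>2"
  have "\<bar>R - 1\<bar> \<le> \<epsilon>" using Rb by (simp add: R_def \<epsilon>_def \<delta>_def)
  then have "R \<le> 1 + \<epsilon>" "1 - \<epsilon> \<le> R" by auto
  then have "R * B \<le> (1 + \<epsilon>) * B" "(1 - \<epsilon>) * B \<le> R * B" using B0 by (auto intro: mult_right_mono)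
  then show ?thesis using AR B0 unfolding R_def[symmetric] by (simp add: algebra_simps)
qed

lemma gk_pos: "r > 0 \<Longrightarrow> \<rho> > 0 \<Longrightarrow> gk r \<rho> a > 0"
  unfolding gk_def by (simp add: add_pos_pos add_pos_nonneg)

lemma gg_sq:
  assumes "r > 0" "\<rho> > 0"
  shows "(gg r \<rho> a)\<^sup>2 = 2 * r * \<rho> - 2 * r * \<rho> / sqrt (1 + a\<^sup>2)"
proof -
  define s where "s = sqrt (1 + a\<^sup>2)"
  have s: "s > 0" "s\<^sup>2 = 1 + a\<^sup>2" unfolding s_def by (auto simp: add_pos_nonneg)
  have "(gg r \<rho> a)\<^sup>2 = a\<^sup>2 * (2 * r * \<rho> / (s * (1 + s)))"
    unfolding gg_def gk_def s_def[symmetric] using assms s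
    by (simp add: power_mult_distrib add_pos_pos)
  also have "a\<^sup>2 = (s - 1) * (s + 1)" using s by (simp add: algebra_simps power2_eq_square)
  also have "(s - 1) * (s + 1) * (2 * r * \<rho> / (s * (1 + s))) = 2 * r * \<rho> - 2 * r * \<rho> / s"
  proof -
    have "1 + s > 0" "s + s * s > 0" using s by (auto simp: add_pos_pos)
    then show ?thesis using s by (simp add: field_simps)
  qed
  finally show ?thesis by (simp add: s_def)
qed

lemma one_plus_sq_ne: "1 + x\<^sup>2 \<noteq> (0::real)"
  by (metis add_pos_nonneg less_irrefl zero_le_power2 zero_less_one)

lemma one_plus_sqrt_ne: "1 + sqrt (1 + x\<^sup>2) \<noteq> (0::real)"
  by (metis add_pos_nonneg less_irrefl real_sqrt_ge_zero zero_le_power2 add_nonneg_nonneg zero_le_one zero_less_one)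

lemma gd_cont: "r > 0 \<Longrightarrow> \<rho> > 0 \<Longrightarrow> continuous_on A (gd r \<rho>)"
  unfolding gd_def[abs_def] gk_def
  by (intro continuous_intros) (auto simp: add_pos_pos add_pos_nonneg one_plus_sq_ne one_plus_sqrt_ne)

lemma gd_nonneg: "r > 0 \<Longrightarrow> \<rho> > 0 \<Longrightarrow> gd r \<rho> a \<ge> 0"
  unfolding gd_def using gk_pos[of r \<rho> a] by simp

lemma gg_0: "gg r \<rho> 0 = 0" by (simp add: gg_def)

lemma gg_1:
  assumes "r > 0" "\<rho> > 0" "r * \<rho> \<ge> 2 * K\<^sup>2"
  shows "gg r \<rho> 1 \<ge> K"
proof -
  have s2: "sqrt 2 \<ge> 4 / 3"
    by (rule real_le_rsqrt) (simp add: power2_eq_square)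
  have "2 * r * \<rho> / sqrt 2 \<le> 2 * r * \<rho> / (4 / 3)"
    using assms s2 by (intro divide_left_mono) auto
  then have "(gg r \<rho> 1)\<^sup>2 \<ge> r * \<rho> / 2" using gg_sq[OF assms(1,2), of 1] by simp
  then have "(gg r \<rho> 1)\<^sup>2 \<ge> K\<^sup>2" using assms by simp
  moreover have "gg r \<rho> 1 \<ge> 0" unfolding gg_def using gk_pos[OF assms(1,2), of 1] by simp
  ultimately show ?thesis by (rule power2_le_imp_le)
qed

lemma main_close:
  fixes x :: "real \<times> 'a::euclidean_space" and J :: "real \<Rightarrow> real"
  assumes cJ: "continuous_on {0..} J" and nn: "\<forall>r\<ge>0. J r \<ge> 0" and van: "\<forall>t\<ge>K. J t = 0"
    and Mb: "\<forall>t\<ge>0. J t \<le> M" and K: "K > 0" and r1: "r \<ge> 1" and rK: "r \<ge> 2 * (K + K\<^sup>2)"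
    and \<rho>r: "\<bar>\<rho> - r\<bar> \<le> K" and nx: "norm x = r"
  defines "m \<equiv> DIM('a)"
  defines "\<epsilon> \<equiv> 2 ^ (m + 3) * ((K + K\<^sup>2) / r)"
  shows "\<bar>Jtilde J x \<rho> - Jstar TYPE('a) J (r - \<rho>)\<bar> \<le> \<epsilon> * (M * unit_ball_vol (real m) * K ^ m)"
proof -
  note [measurable] = J0_meas[OF cJ]
  have J0nn: "J0 J t \<ge> 0" for t using nn by (simp add: J0_def)
  have J0van: "t \<ge> K \<Longrightarrow> J0 J t = 0" for t using van by (simp add: J0_def)
  have J0M: "J0 J t \<le> M" for t using Mb by (simp add: J0_def)
  have M0: "M \<ge> 0" using J0nn[of 0] J0M[of 0] by linarith
  have m1: "m \<ge> 1" unfolding m_def using DIM_positive by (simp add: Suc_le_eq)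
  have r0: "r > 0" using r1 by simp
  have K2: "2 * K + 2 * K\<^sup>2 \<le> r" using rK by (simp add: distrib_left)
  have Kr: "K \<le> r / 2" using K2 zero_le_power2[of K] by linarith
  have \<rho>0: "\<rho> \<ge> r / 2" using \<rho>r Kr by linarith
  have \<rho>pos: "\<rho> > 0" using \<rho>0 r0 by linarith
  have rK1: "r \<ge> K" using Kr r0 by linarith
  have r\<rho>K: "r * \<rho> \<ge> 2 * K\<^sup>2"
  proof -
    have "r * \<rho> \<ge> r * (r / 2)" using \<rho>0 r0 by (intro mult_left_mono) auto
    moreover have "r * (r / 2) \<ge> (2 * K) * (2 * K) / 2"
    proof -
      have "2 * K \<le> r" using Kr by simp
      then have "(2 * K) * (2 * K) \<le> r * r" using K by (intro mult_mono) auto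
      then show ?thesis by simp
    qed
    ultimately show ?thesis by (simp add: power2_eq_square)
  qed
  have eps0: "\<epsilon> \<ge> 0" using K r0 by (simp add: \<epsilon>_def)
  define \<omega> where "\<omega> = unit_ball_vol (real m)"
  have \<omega>0: "\<omega> \<ge> 0" by (simp add: \<omega>_def)
  define c0 where "c0 = real m * \<omega>"
  have c00: "c0 \<ge> 0" using \<omega>0 by (simp add: c0_def)
  define \<psi> where "\<psi> a = J0 J (sqrt (r\<^sup>2 + \<rho>\<^sup>2 - 2 * r * \<rho> / sqrt (1 + a\<^sup>2)))" for a
  define A where "A a = J0 J (sqrt (r\<^sup>2 + \<rho>\<^sup>2 - 2 * r * \<rho> / sqrt (1 + a\<^sup>2))) *
      \<rho> ^ m / sqrt (1 + a\<^sup>2) ^ (m + 1) * (real m * unit_ball_vol (real m) * a ^ (m - 1))" for a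
  define Fs where "Fs u = J0 J (sqrt ((r - \<rho>)\<^sup>2 + u\<^sup>2)) * (real m * unit_ball_vol (real m) * u ^ (m - 1))" for u
  define B where "B a = Fs (gg r \<rho> a) * gd r \<rho> a" for a
  define T where "T = (\<integral>\<^sup>+a. ennreal (A a) * indicator {0..} a \<partial>lborel)"
  define S where "S = (\<integral>\<^sup>+u. ennreal (Fs u) * indicator {0..} u \<partial>lborel)"
  have JT: "Jtilde J x \<rho> = enn2real T"
    unfolding T_def A_def m_def by (rule Jtilde_formula[OF cJ nn van rK1 \<rho>pos nx])
  have JS: "Jstar TYPE('a) J (r - \<rho>) = enn2real S"
    unfolding S_def Fs_def m_def by (rule Jstar_formula[OF cJ nn])
  have \<psi>van: "\<psi> a = 0" if "a \<ge> 1" for a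
  proof -
    have "1 \<le> a\<^sup>2" using that by (simp add: one_le_power)
    then have "(4 / 3 :: real)\<^sup>2 \<le> 1 + a\<^sup>2" by (simp add: power2_eq_square)
    then have "sqrt (1 + a\<^sup>2) \<ge> 4 / 3" by (rule real_le_rsqrt)
    then have "2 * r * \<rho> / sqrt (1 + a\<^sup>2) \<le> 2 * r * \<rho> / (4 / 3)"
      using r0 \<rho>pos by (intro divide_left_mono) (auto simp: add_pos_nonneg)
    moreover have "2 * r * \<rho> / (4 / 3) = 3 / 2 * (r * \<rho>)" by simp
    moreover have "2 * (r * \<rho>) \<le> r\<^sup>2 + \<rho>\<^sup>2"
    proof -
      have "0 \<le> (r - \<rho>)\<^sup>2" by simp
      moreover have "(r - \<rho>)\<^sup>2 = r\<^sup>2 + \<rho>\<^sup>2 - 2 * (r * \<rho>)" by (simp add: power2_eq_square algebra_simps)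
      ultimately show ?thesis by linarith
    qed
    ultimately have "r\<^sup>2 + \<rho>\<^sup>2 - 2 * r * \<rho> / sqrt (1 + a\<^sup>2) \<ge> K\<^sup>2"
      using r\<rho>K
    proof -
      define P where "P = r * \<rho>"
      define X where "X = 2 * r * \<rho> / sqrt (1 + a\<^sup>2)"
      assume h: "2 * r * \<rho> / sqrt (1 + a\<^sup>2) \<le> 2 * r * \<rho> / (4 / 3)" "2 * r * \<rho> / (4 / 3) = 3 / 2 * (r * \<rho>)"
        "2 * (r * \<rho>) \<le> r\<^sup>2 + \<rho>\<^sup>2" "2 * K\<^sup>2 \<le> r * \<rho>"
      have "X \<le> 3 / 2 * P" using h(1) unfolding h(2) X_def P_def .
      moreover have "2 * P \<le> r\<^sup>2 + \<rho>\<^sup>2" "2 * K\<^sup>2 \<le> P" using h(3,4) unfolding P_def by auto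
      ultimately have "K\<^sup>2 \<le> r\<^sup>2 + \<rho>\<^sup>2 - X" by linarith
      then show ?thesis unfolding X_def .
    qed
    then have "sqrt (r\<^sup>2 + \<rho>\<^sup>2 - 2 * r * \<rho> / sqrt (1 + a\<^sup>2)) \<ge> K"
      using K by (simp add: real_le_rsqrt)
    then show ?thesis by (simp add: \<psi>_def J0van)
  qed
  have T1: "T = (\<integral>\<^sup>+a. ennreal (A a) * indicator {0..1} a \<partial>lborel)"
    unfolding T_def
  proof (rule nn_integral_cong)
    fix a :: real
    show "ennreal (A a) * indicator {0..} a = ennreal (A a) * indicator {0..1} a"
    proof (cases "a \<le> 1")
      case False
      then have "\<psi> a = 0" using \<psi>van by simp
      then have "A a = 0" by (simp add: A_def \<psi>_def)
      then show ?thesis by simp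
    qed (auto simp: indicator_def)
  qed
  have g1K: "gg r \<rho> 1 \<ge> K" by (rule gg_1[OF r0 \<rho>pos r\<rho>K])
  have S1: "S = (\<integral>\<^sup>+u. ennreal (Fs u) * indicator {gg r \<rho> 0..gg r \<rho> 1} u \<partial>lborel)"
    unfolding S_def gg_0
  proof (rule nn_integral_cong)
    fix u :: real
    show "ennreal (Fs u) * indicator {0..} u = ennreal (Fs u) * indicator {0..gg r \<rho> 1} u"
    proof (cases "u \<le> gg r \<rho> 1")
      case False
      then have "u \<ge> K" using g1K by linarith
      then have "sqrt ((r - \<rho>)\<^sup>2 + u\<^sup>2) \<ge> K"
        using K by (intro real_le_rsqrt) (simp add: power_mono add_increasing)
      then have "Fs u = 0" by (simp add: Fs_def J0van)
      then show ?thesis by simp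
    qed (auto simp: indicator_def)
  qed
  have Fsm: "Fs \<in> borel_measurable borel" unfolding Fs_def by measurable
  have S2: "S = (\<integral>\<^sup>+a. ennreal (B a) * indicator {0..1} a \<partial>lborel)"
  proof -
    have S1': "S = (\<integral>\<^sup>+u. ennreal (Fs u * indicator {gg r \<rho> 0..gg r \<rho> 1} u) \<partial>lborel)"
      unfolding S1 by (intro nn_integral_cong) (simp add: indicator_def)
    have "S = (\<integral>\<^sup>+a. Fs (gg r \<rho> a) * gd r \<rho> a * indicator {0..1} a \<partial>lborel)"
      unfolding S1'
    proof (rule nn_integral_substitution)
      show "set_borel_measurable borel {gg r \<rho> 0..gg r \<rho> 1} Fs"
        using Fsm by (simp add: set_borel_measurable_def)
      show "(gg r \<rho> has_real_derivative gd r \<rho> a) (at a)" for a by (rule gg_deriv[OF r0 \<rho>pos])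
      show "continuous_on {0..1} (gd r \<rho>)" by (rule gd_cont[OF r0 \<rho>pos])
      show "gd r \<rho> a \<ge> 0" for a by (rule gd_nonneg[OF r0 \<rho>pos])
    qed simp
    also have "\<dots> = (\<integral>\<^sup>+a. ennreal (B a) * indicator {0..1} a \<partial>lborel)"
      by (intro nn_integral_cong) (simp add: B_def indicator_def)
    finally show ?thesis .
  qed
  have pw: "A a \<le> (1 + \<epsilon>) * B a \<and> B a \<le> A a + \<epsilon> * B a \<and> 0 \<le> B a" if a: "a \<in> {0..1}" for a
  proof -
    have eqE: "(r - \<rho>)\<^sup>2 + (gg r \<rho> a)\<^sup>2 = r\<^sup>2 + \<rho>\<^sup>2 - 2 * r * \<rho> / sqrt (1 + a\<^sup>2)"
      using gg_sq[OF r0 \<rho>pos, of a] by (simp add: power2_eq_square algebra_simps)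
    have Beq: "B a = \<psi> a * (c0 * (gg r \<rho> a) ^ (m - 1)) * gd r \<rho> a"
      unfolding B_def Fs_def \<psi>_def c0_def \<omega>_def eqE by (simp add: mult.assoc)
    have Aeq: "A a = \<psi> a * \<rho> ^ m / sqrt (1 + a\<^sup>2) ^ (m + 1) * (c0 * a ^ (m - 1))"
      unfolding A_def \<psi>_def c0_def \<omega>_def by simp
    have h\<psi>: "r\<^sup>2 + \<rho>\<^sup>2 - 2 * r * \<rho> / sqrt (1 + a\<^sup>2) < K\<^sup>2" if "\<psi> a \<noteq> 0"
    proof (rule ccontr)
      assume "\<not> ?thesis"
      then have "sqrt (r\<^sup>2 + \<rho>\<^sup>2 - 2 * r * \<rho> / sqrt (1 + a\<^sup>2)) \<ge> K"
        using K by (simp add: real_le_rsqrt)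
      then show False using that by (simp add: \<psi>_def J0van)
    qed
    show ?thesis unfolding Aeq Beq \<epsilon>_def
      by (rule pointwise_cmp[OF r1 rK \<rho>r K _ m1 c00]) (use a h\<psi> in \<open>auto simp: \<psi>_def J0nn\<close>)
  qed
  define S' where "S' = (\<integral>\<^sup>+a. ennreal (B a) * indicator {0..1} a \<partial>lborel)"
  have Bm: "(\<lambda>a. ennreal (B a) * indicator {0..1} a) \<in> borel_measurable lborel"
  proof -
    have "(\<lambda>a. Fs (gg r \<rho> a)) \<in> borel_measurable borel"
    proof (rule measurable_compose[OF _ Fsm])
      have "continuous_on UNIV (gg r \<rho>)"
        using gg_deriv[OF r0 \<rho>pos] by (meson DERIV_continuous continuous_at_imp_continuous_on)
      then show "gg r \<rho> \<in> borel_measurable borel" by (rule borel_measurable_continuous_onI)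
    qed
    moreover have "gd r \<rho> \<in> borel_measurable borel"
      by (rule borel_measurable_continuous_onI) (rule gd_cont[OF r0 \<rho>pos])
    ultimately show ?thesis unfolding B_def by measurable
  qed
  have TS1: "T \<le> ennreal (1 + \<epsilon>) * S'"
  proof -
    have "T \<le> (\<integral>\<^sup>+a. ennreal (1 + \<epsilon>) * (ennreal (B a) * indicator {0..1} a) \<partial>lborel)"
      unfolding T1
    proof (rule nn_integral_mono)
      fix a :: real
      show "ennreal (A a) * indicator {0..1} a \<le> ennreal (1 + \<epsilon>) * (ennreal (B a) * indicator {0..1} a)"
      proof (cases "a \<in> {0..1}")
        case True
        then have h: "A a \<le> (1 + \<epsilon>) * B a" "0 \<le> B a" using pw by auto
        have "ennreal (A a) \<le> ennreal ((1 + \<epsilon>) * B a)" using h(1) by (rule ennreal_leI)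
        also have "\<dots> = ennreal (1 + \<epsilon>) * ennreal (B a)" by (rule ennreal_mult) (use eps0 h in auto)
        finally show ?thesis using True by simp
      qed simp
    qed
    also have "\<dots> = ennreal (1 + \<epsilon>) * S'" unfolding S'_def by (rule nn_integral_cmult[OF Bm])
    finally show ?thesis .
  qed
  have TS2: "S' \<le> T + ennreal \<epsilon> * S'"
  proof -
    have "S' \<le> (\<integral>\<^sup>+a. ennreal (A a) * indicator {0..1} a + ennreal \<epsilon> * (ennreal (B a) * indicator {0..1} a) \<partial>lborel)"
      unfolding S'_def
    proof (rule nn_integral_mono)
      fix a :: real
      show "ennreal (B a) * indicator {0..1} a \<le> ennreal (A a) * indicator {0..1} a + ennreal \<epsilon> * (ennreal (B a) * indicator {0..1} a)"
      proof (cases "a \<in> {0..1}")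
        case True
        then have h: "B a \<le> A a + \<epsilon> * B a" "0 \<le> B a" using pw by auto
        have A0: "0 \<le> A a"
          unfolding A_def using True J0nn \<rho>pos \<omega>0 unfolding \<omega>_def
          by (intro mult_nonneg_nonneg divide_nonneg_nonneg) auto
        have "ennreal (B a) \<le> ennreal (A a + \<epsilon> * B a)" using h(1) by (rule ennreal_leI)
        also have "\<dots> = ennreal (A a) + ennreal (\<epsilon> * B a)" by (rule ennreal_plus) (use A0 eps0 h in auto)
        also have "ennreal (\<epsilon> * B a) = ennreal \<epsilon> * ennreal (B a)" by (rule ennreal_mult) (use eps0 h in auto)
        finally have "ennreal (B a) \<le> ennreal (A a) + ennreal \<epsilon> * ennreal (B a)" .
        then show ?thesis using True by simp
      qed simp
    qed
    also have "\<dots> = (\<integral>\<^sup>+a. ennreal (A a) * indicator {0..1} a \<partial>lborel) + ennreal \<epsilon> * S'"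
    proof -
      have Am: "(\<lambda>a. ennreal (A a) * indicator {0..1} a) \<in> borel_measurable lborel"
        unfolding A_def by measurable
      have Bm': "(\<lambda>a. ennreal \<epsilon> * (ennreal (B a) * indicator {0..1} a)) \<in> borel_measurable lborel"
        by (rule borel_measurable_times_ennreal) (use Bm in auto)
      show ?thesis by (subst nn_integral_add[OF Am Bm']) (simp add: nn_integral_cmult[OF Bm] S'_def)
    qed
    finally show ?thesis unfolding T1 .
  qed
  have Sb: "S \<le> ennreal (M * \<omega> * K ^ m)"
  proof -
    have "S \<le> (\<integral>\<^sup>+u. ennreal (M * c0 * u ^ (m - 1)) * indicator {0..K} u \<partial>lborel)"
      unfolding S_def
    proof (rule nn_integral_mono)
      fix u :: real
      show "ennreal (Fs u) * indicator {0..} u \<le> ennreal (M * c0 * u ^ (m - 1)) * indicator {0..K} u"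
      proof (cases "0 \<le> u \<and> u \<le> K")
        case True
        have "Fs u \<le> M * c0 * u ^ (m - 1)"
          unfolding Fs_def c0_def \<omega>_def using True J0M \<omega>0
          by (simp add: mult.assoc mult_right_mono \<omega>_def)
        then show ?thesis using True by (simp add: ennreal_leI)
      next
        case False
        show ?thesis
        proof (cases "u \<ge> 0")
          case True
          then have "u > K" using False by simp
          then have "sqrt ((r - \<rho>)\<^sup>2 + u\<^sup>2) \<ge> K"
            using K by (intro real_le_rsqrt) (simp add: power_mono add_increasing)
          then have "Fs u = 0" by (simp add: Fs_def J0van)
          then show ?thesis by simp
        qed (simp add: indicator_def)
      qed
    qed
    also have "\<dots> = ennreal (M * \<omega> * K ^ m - M * \<omega> * 0 ^ m)"
    proof (rule nn_integral_FTC_Icc)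
      fix u assume u: "u \<in> {0..K}"
      show "((\<lambda>u. M * \<omega> * u ^ m) has_real_derivative M * c0 * u ^ (m - 1)) (at u)"
        by (auto intro!: derivative_eq_intros simp: c0_def)
      show "0 \<le> M * c0 * u ^ (m - 1)" using u M0 c00 by simp
    qed (use K in auto)
    also have "\<dots> = ennreal (M * \<omega> * K ^ m)" using m1 by (simp add: power_0_left)
    finally show ?thesis .
  qed
  have SS': "S = S'" using S2 by (simp add: S'_def)
  have Sfin: "S' < \<infinity>"
  proof -
    have "S' \<le> ennreal (M * \<omega> * K ^ m)" using Sb SS' by simp
    also have "\<dots> < \<infinity>" by simp
    finally show ?thesis .
  qed
  have Tfin: "T < \<infinity>"
  proof -
    have "ennreal (1 + \<epsilon>) * S' < \<infinity>" using Sfin by (simp add: ennreal_mult_less_top)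
    with TS1 show ?thesis by (rule le_less_trans)
  qed
  have t1: "enn2real T \<le> (1 + \<epsilon>) * enn2real S'"
  proof -
    have "enn2real T \<le> enn2real (ennreal (1 + \<epsilon>) * S')"
      by (rule enn2real_mono[OF TS1]) (use Sfin in \<open>simp add: ennreal_mult_less_top\<close>)
    also have "\<dots> = (1 + \<epsilon>) * enn2real S'" using eps0 by (simp add: enn2real_mult)
    finally show ?thesis .
  qed
  have t2: "enn2real S' \<le> enn2real T + \<epsilon> * enn2real S'"
  proof -
    have "enn2real S' \<le> enn2real (T + ennreal \<epsilon> * S')"
      by (rule enn2real_mono[OF TS2]) (use Sfin Tfin in \<open>simp add: ennreal_mult_less_top\<close>)
    also have "\<dots> = enn2real T + \<epsilon> * enn2real S'"
      using eps0 Sfin Tfin by (simp add: enn2real_plus enn2real_mult ennreal_mult_less_top)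
    finally show ?thesis .
  qed
  have sb: "enn2real S' \<le> M * \<omega> * K ^ m"
  proof -
    have "enn2real S' \<le> enn2real (ennreal (M * \<omega> * K ^ m))"
      by (rule enn2real_mono) (use Sb SS' in auto)
    then show ?thesis using M0 \<omega>0 K by simp
  qed
  have s0: "enn2real S' \<ge> 0" by simp
  have "\<bar>enn2real T - enn2real S'\<bar> \<le> \<epsilon> * enn2real S'" using t1 t2 by (simp add: algebra_simps abs_le_iff)
  also have "\<dots> \<le> \<epsilon> * (M * \<omega> * K ^ m)" using sb eps0 by (intro mult_left_mono) auto
  finally show ?thesis using JT JS SS' by (simp add: \<omega>_def)
qed

lemma far_zero:
  fixes x :: "real \<times> 'a::euclidean_space" and J :: "real \<Rightarrow> real"
  assumes cJ: "continuous_on {0..} J" and nn: "\<forall>r\<ge>0. J r \<ge> 0" and van: "\<forall>t\<ge>K. J t = 0"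
    and K: "K > 0" and rK: "r \<ge> K" and \<rho>: "\<rho> > 0" and far: "\<bar>r - \<rho>\<bar> > K" and nx: "norm x = r"
  shows "Jtilde J x \<rho> = 0 \<and> Jstar TYPE('a) J (r - \<rho>) = 0"
proof
  have J0van: "t \<ge> K \<Longrightarrow> J0 J t = 0" for t using van by (simp add: J0_def)
  have r0: "r \<ge> 0" using rK K by simp
  have K2: "K\<^sup>2 \<le> (r - \<rho>)\<^sup>2"
  proof -
    have "\<bar>K\<bar> \<le> \<bar>r - \<rho>\<bar>" using far K by simp
    then show ?thesis by (simp add: abs_le_square_iff)
  qed
  show "Jtilde J x \<rho> = 0"
  proof -
    have "Jtilde J x \<rho> = enn2real (\<integral>\<^sup>+a. ennreal (J0 J (sqrt (r\<^sup>2 + \<rho>\<^sup>2 - 2 * r * \<rho> / sqrt (1 + a\<^sup>2))) *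
      \<rho> ^ DIM('a) / sqrt (1 + a\<^sup>2) ^ (DIM('a) + 1) * (real DIM('a) * unit_ball_vol (real DIM('a)) * a ^ (DIM('a) - 1))) * indicator {0..} a \<partial>lborel)"
      by (rule Jtilde_formula[OF cJ nn van rK \<rho> nx])
    also have "\<dots> = enn2real (\<integral>\<^sup>+a. 0 \<partial>(lborel::real measure))"
    proof -
      have z: "ennreal (J0 J (sqrt (r\<^sup>2 + \<rho>\<^sup>2 - 2 * r * \<rho> / sqrt (1 + a\<^sup>2))) *
      \<rho> ^ DIM('a) / sqrt (1 + a\<^sup>2) ^ (DIM('a) + 1) * (real DIM('a) * unit_ball_vol (real DIM('a)) * a ^ (DIM('a) - 1))) * indicator {0..} a = 0" for a :: real
      proof -
      have s1: "sqrt (1 + a\<^sup>2) \<ge> 1" by simp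
      have "2 * r * \<rho> / sqrt (1 + a\<^sup>2) \<le> 2 * r * \<rho> / 1"
        by (rule divide_left_mono) (use s1 r0 \<rho> in \<open>auto simp: add_pos_nonneg\<close>)
      then have "2 * r * \<rho> / sqrt (1 + a\<^sup>2) \<le> 2 * r * \<rho>" by simp
      moreover have "(r - \<rho>)\<^sup>2 = r\<^sup>2 + \<rho>\<^sup>2 - 2 * r * \<rho>" by (simp add: power2_eq_square algebra_simps)
      ultimately have "K\<^sup>2 \<le> r\<^sup>2 + \<rho>\<^sup>2 - 2 * r * \<rho> / sqrt (1 + a\<^sup>2)" using K2 by linarith
      then have "K \<le> sqrt (r\<^sup>2 + \<rho>\<^sup>2 - 2 * r * \<rho> / sqrt (1 + a\<^sup>2))" by (rule real_le_rsqrt)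
      then show ?thesis by (simp add: J0van)
      qed
      show ?thesis by (simp only: z)
    qed
    finally show ?thesis by simp
  qed
  show "Jstar TYPE('a) J (r - \<rho>) = 0"
  proof -
    have "Jstar TYPE('a) J (r - \<rho>) = enn2real (\<integral>\<^sup>+u. ennreal (J0 J (sqrt ((r - \<rho>)\<^sup>2 + u\<^sup>2)) *
      (real DIM('a) * unit_ball_vol (real DIM('a)) * u ^ (DIM('a) - 1))) * indicator {0..} u \<partial>lborel)"
      by (rule Jstar_formula[OF cJ nn])
    also have "\<dots> = enn2real (\<integral>\<^sup>+u. 0 \<partial>(lborel::real measure))"
    proof -
      have z: "ennreal (J0 J (sqrt ((r - \<rho>)\<^sup>2 + u\<^sup>2)) *
        (real DIM('a) * unit_ball_vol (real DIM('a)) * u ^ (DIM('a) - 1))) * indicator {0..} u = 0" for u :: real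
      proof -
      have "K\<^sup>2 \<le> (r - \<rho>)\<^sup>2 + u\<^sup>2" using K2 by (simp add: add_increasing2)
      then have "K \<le> sqrt ((r - \<rho>)\<^sup>2 + u\<^sup>2)" by (rule real_le_rsqrt)
      then show ?thesis by (simp add: J0van)
      qed
      show ?thesis by (simp only: z)
    qed
    finally show ?thesis by simp
  qed
qed

theorem proposition2p3:
  fixes J :: "real \<Rightarrow> real" and K :: real
  assumes "kernel_J TYPE('a::euclidean_space) J"
    and "K > 0"
    and "\<forall>r\<ge>K. J r = 0"
  shows "\<exists>L0>0. \<exists>C>0. \<forall>r\<ge>L0. \<forall>x::real \<times> 'a. norm x = r \<longrightarrow>
           (\<forall>\<rho>\<in>{r - K..r + K}. \<bar>Jtilde J x \<rho> - Jstar TYPE('a) J (r - \<rho>)\<bar> \<le> C / r) \<and>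
           (\<forall>\<rho>>0. \<rho> \<notin> {r - K..r + K} \<longrightarrow> Jtilde J x \<rho> = 0 \<and> Jstar TYPE('a) J (r - \<rho>) = 0)"
proof -
  have cJ: "continuous_on {0..} J" and bJ: "bounded (J ` {0..})" and nn: "\<forall>r\<ge>0. J r \<ge> 0"
    using assms(1) unfolding kernel_J_def by auto
  obtain M where M: "\<forall>t\<ge>0. J t \<le> M"
  proof -
    obtain B where "\<forall>y\<in>J ` {0..}. norm y \<le> B" using bJ by (auto simp: bounded_iff)
    then have "\<forall>t\<ge>0. J t \<le> B" by force
    then show ?thesis using that by blast
  qed
  have M0: "M \<ge> 0" using M nn by force
  define m where "m = DIM('a)"
  define \<omega> where "\<omega> = unit_ball_vol (real m)"
  have \<omega>0: "\<omega> \<ge> 0" by (simp add: \<omega>_def)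
  define C0 where "C0 = 2 ^ (m + 3) * (K + K\<^sup>2) * (M * \<omega> * K ^ m)"
  have C00: "C0 \<ge> 0" using M0 \<omega>0 assms(2) by (simp add: C0_def)
  define L0 where "L0 = max 1 (2 * (K + K\<^sup>2))"
  show ?thesis
  proof (rule exI[of _ L0], rule conjI)
    show "L0 > 0" by (simp add: L0_def)
  next
  show "\<exists>C>0. \<forall>r\<ge>L0. \<forall>x::real \<times> 'a. norm x = r \<longrightarrow>
           (\<forall>\<rho>\<in>{r - K..r + K}. \<bar>Jtilde J x \<rho> - Jstar TYPE('a) J (r - \<rho>)\<bar> \<le> C / r) \<and>
           (\<forall>\<rho>>0. \<rho> \<notin> {r - K..r + K} \<longrightarrow> Jtilde J x \<rho> = 0 \<and> Jstar TYPE('a) J (r - \<rho>) = 0)"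
  proof (rule exI[of _ "C0 + 1"], intro conjI allI impI ballI)
    show "C0 + 1 > 0" using C00 by simp
    fix r :: real and x :: "real \<times> 'a" and \<rho> :: real
    assume r: "L0 \<le> r" and nx: "norm x = r"
    have r1: "r \<ge> 1" and rK: "r \<ge> 2 * (K + K\<^sup>2)" using r by (auto simp: L0_def)
    {
      assume \<rho>: "\<rho> \<in> {r - K..r + K}"
      then have \<rho>r: "\<bar>\<rho> - r\<bar> \<le> K" by auto
      have "\<bar>Jtilde J x \<rho> - Jstar TYPE('a) J (r - \<rho>)\<bar> \<le> 2 ^ (m + 3) * ((K + K\<^sup>2) / r) * (M * \<omega> * K ^ m)"
        unfolding m_def \<omega>_def by (rule main_close[OF cJ nn assms(3) M assms(2) r1 rK \<rho>r nx])
      also have "\<dots> = C0 / r" by (simp add: C0_def)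
      also have "\<dots> \<le> (C0 + 1) / r" using r1 by (intro divide_right_mono) auto
      finally show "\<bar>Jtilde J x \<rho> - Jstar TYPE('a) J (r - \<rho>)\<bar> \<le> (C0 + 1) / r" .
    }
    {
      assume \<rho>: "\<rho> > 0" and nin: "\<rho> \<notin> {r - K..r + K}"
      have far: "\<bar>r - \<rho>\<bar> > K" using nin by auto
      have rKK: "r \<ge> K"
      proof -
        have "2 * K + 2 * K\<^sup>2 \<le> r" using rK by (simp add: distrib_left)
        then show ?thesis using assms(2) zero_le_power2[of K] by linarith
      qed
      show "Jtilde J x \<rho> = 0" "Jstar TYPE('a) J (r - \<rho>) = 0"
        using far_zero[OF cJ nn assms(3) assms(2) rKK \<rho> far nx] by auto
    }
  qed
  qed
qed

end
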